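(* Let $\mathcal{F}$ be a family of irreducible and reversible finite Markov chains. (1) Continuous time, $\mathcal{F}=(\mu_n,\mathcal{S}_n,L_n,\pi_n)_{n\ge1}$: if $\liminf_n\pi_n(|\mu_n/\pi_n|^2)>1$, then $\mathcal{F}$ has an $L^2$-cutoff if and only if it has an $L^2$-pre-cutoff. (2) Discrete time, $\mathcal{F}=(\mu_n,\mathcal{S}_n,K_n,\pi_n)_{n\ge1}$: if $\liminf_n\pi_n(|\mu_nK_n/\pi_n|^2)>1$ and $T_{n,2}(\mu_n,\epsilon_0)\to\infty$ for some $\epsilon_0\in(0,\infty)$, then $\mathcal{F}$ has an $L^2$-cutoff if and only if it has an $L^2$-pre-cutoff.
   Context: For a finite irreducible Markov chain on $\mathcal{S}$ with stationary distribution $\pi$ and initial distribution $\mu$: in discrete time with transition matrix $K$, $d_2(\mu,m)=\big(\sum_y|\mu K^m(y)/\pi(y)-1|^2\pi(y)\big)^{1/2}$ for integers $m\ge0$; in continuous time with generator $L$ and $H_t=e^{tL}$, $d_2(\mu,t)=\big(\sum_y|\mu H_t(y)/\pi(y)-1|^2\pi(y)\big)^{1/2}$, $t\ge0$. Here $\pi(|f|^2)=\sum_y|f(y)|^2\pi(y)$ and $(\mu/\pi)(y)=\mu(y)/\pi(y)$. The $L^2$-mixing time is $T_2(\mu,\epsilon)=\min\{t\ge0:d_2(\mu,t)\le\epsilon\}$ ($t$ integer in discrete time). $d_{n,2},T_{n,2}$ denote these for the $n$th chain. $L^2$-cutoff (discrete time): there is $t_n>0$ with $d_{n,2}(\mu_n,\lceil(1+a)t_n\rceil)\to0$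 and $d_{n,2}(\mu_n,\lfloor(1-a)t_n\rfloor)\to\infty$ for all $a\in(0,1)$. $L^2$-pre-cutoff (discrete time): there are $t_n>0$ and $0<A<B$ with $\limsup_n d_{n,2}(\mu_n,\lceil Bt_n\rceil)=0$ and $\liminf_n d_{n,2}(\mu_n,\lfloor At_n\rfloor)>0$. In continuous time both definitions are the same with $\lceil\cdot\rceil,\lfloor\cdot\rfloor$ removed. *)

theory Defs
  imports "HOL-Analysis.Analysis"
begin

text \<open>Kernels on a finite state space S are functions of type 'a => 'a => real,
  only their values on S x S matter.\<close>

fun mpow :: "'a set \<Rightarrow> ('a \<Rightarrow> 'a \<Rightarrow> real) \<Rightarrow> nat \<Rightarrow> 'a \<Rightarrow> 'a \<Rightarrow> real" where
  "mpow S K 0 x y = (if x = y then 1 else 0)"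
| "mpow S K (Suc m) x y = (\<Sum>z\<in>S. mpow S K m x z * K z y)"

definition heat :: "'a set \<Rightarrow> ('a \<Rightarrow> 'a \<Rightarrow> real) \<Rightarrow> real \<Rightarrow> 'a \<Rightarrow> 'a \<Rightarrow> real" where
  "heat S L t x y = (\<Sum>k. t ^ k / fact k * mpow S L k x y)"

definition prob_on :: "'a set \<Rightarrow> ('a \<Rightarrow> real) \<Rightarrow> bool" where
  "prob_on S \<mu> \<longleftrightarrow> (\<forall>x\<in>S. \<mu> x \<ge> 0) \<and> sum \<mu> S = 1"

definition stochastic :: "'a set \<Rightarrow> ('a \<Rightarrow> 'a \<Rightarrow> real) \<Rightarrow> bool" where
  "stochastic S K \<longleftrightarrow> (\<forall>x\<in>S. \<forall>y\<in>S. K x y \<ge> 0) \<and> (\<forall>x\<in>S. (\<Sum>y\<in>S. K x y) = 1)"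

definition generator :: "'a set \<Rightarrow> ('a \<Rightarrow> 'a \<Rightarrow> real) \<Rightarrow> bool" where
  "generator S L \<longleftrightarrow> (\<forall>x\<in>S. \<forall>y\<in>S. x \<noteq> y \<longrightarrow> L x y \<ge> 0) \<and> (\<forall>x\<in>S. (\<Sum>y\<in>S. L x y) = 0)"

definition irreducible_disc :: "'a set \<Rightarrow> ('a \<Rightarrow> 'a \<Rightarrow> real) \<Rightarrow> bool" where
  "irreducible_disc S K \<longleftrightarrow> (\<forall>x\<in>S. \<forall>y\<in>S. \<exists>m. mpow S K m x y > 0)"

text \<open>Continuous time: every state reachable through jumps of positive rate.\<close>
definition irreducible_cont :: "'a set \<Rightarrow> ('a \<Rightarrow> 'a \<Rightarrow> real) \<Rightarrow> bool" where
  "irreducible_cont S L \<longleftrightarrow> irreducible_disc S (\<lambda>x y. if x = y then 0 else L x y)"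

definition stationary_disc :: "'a set \<Rightarrow> ('a \<Rightarrow> 'a \<Rightarrow> real) \<Rightarrow> ('a \<Rightarrow> real) \<Rightarrow> bool" where
  "stationary_disc S K \<pi> \<longleftrightarrow> prob_on S \<pi> \<and> (\<forall>y\<in>S. (\<Sum>x\<in>S. \<pi> x * K x y) = \<pi> y)"

definition stationary_cont :: "'a set \<Rightarrow> ('a \<Rightarrow> 'a \<Rightarrow> real) \<Rightarrow> ('a \<Rightarrow> real) \<Rightarrow> bool" where
  "stationary_cont S L \<pi> \<longleftrightarrow> prob_on S \<pi> \<and> (\<forall>y\<in>S. (\<Sum>x\<in>S. \<pi> x * L x y) = 0)"

definition reversible :: "'a set \<Rightarrow> ('a \<Rightarrow> 'a \<Rightarrow> real) \<Rightarrow> ('a \<Rightarrow> real) \<Rightarrow> bool" where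
  "reversible S K \<pi> \<longleftrightarrow> (\<forall>x\<in>S. \<forall>y\<in>S. \<pi> x * K x y = \<pi> y * K y x)"

definition disc_chain :: "'a set \<Rightarrow> ('a \<Rightarrow> 'a \<Rightarrow> real) \<Rightarrow> ('a \<Rightarrow> real) \<Rightarrow> ('a \<Rightarrow> real) \<Rightarrow> bool" where
  "disc_chain S K \<pi> \<mu> \<longleftrightarrow> finite S \<and> S \<noteq> {} \<and> stochastic S K \<and> irreducible_disc S K
     \<and> stationary_disc S K \<pi> \<and> reversible S K \<pi> \<and> prob_on S \<mu>"

definition cont_chain :: "'a set \<Rightarrow> ('a \<Rightarrow> 'a \<Rightarrow> real) \<Rightarrow> ('a \<Rightarrow> real) \<Rightarrow> ('a \<Rightarrow> real) \<Rightarrow> bool" where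
  "cont_chain S L \<pi> \<mu> \<longleftrightarrow> finite S \<and> S \<noteq> {} \<and> generator S L \<and> irreducible_cont S L
     \<and> stationary_cont S L \<pi> \<and> reversible S L \<pi> \<and> prob_on S \<mu>"

definition pi_sq :: "'a set \<Rightarrow> ('a \<Rightarrow> real) \<Rightarrow> ('a \<Rightarrow> real) \<Rightarrow> real" where
  "pi_sq S \<pi> f = (\<Sum>y\<in>S. \<bar>f y\<bar>^2 * \<pi> y)"

definition d2_disc :: "'a set \<Rightarrow> ('a \<Rightarrow> 'a \<Rightarrow> real) \<Rightarrow> ('a \<Rightarrow> real) \<Rightarrow> ('a \<Rightarrow> real) \<Rightarrow> nat \<Rightarrow> real" where
  "d2_disc S K \<pi> \<mu> m =
     sqrt (pi_sq S \<pi> (\<lambda>y. (\<Sum>x\<in>S. \<mu> x * mpow S K m x y) / \<pi> y - 1))"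

definition d2_cont :: "'a set \<Rightarrow> ('a \<Rightarrow> 'a \<Rightarrow> real) \<Rightarrow> ('a \<Rightarrow> real) \<Rightarrow> ('a \<Rightarrow> real) \<Rightarrow> real \<Rightarrow> real" where
  "d2_cont S L \<pi> \<mu> t =
     sqrt (pi_sq S \<pi> (\<lambda>y. (\<Sum>x\<in>S. \<mu> x * heat S L t x y) / \<pi> y - 1))"

text \<open>L2 mixing times, valued in ereal (infinity if the set is empty).\<close>
definition T2_disc :: "'a set \<Rightarrow> ('a \<Rightarrow> 'a \<Rightarrow> real) \<Rightarrow> ('a \<Rightarrow> real) \<Rightarrow> ('a \<Rightarrow> real) \<Rightarrow> real \<Rightarrow> ereal" where
  "T2_disc S K \<pi> \<mu> \<epsilon> = (INF m\<in>{m::nat. d2_disc S K \<pi> \<mu> m \<le> \<epsilon>}. ereal (real m))"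

definition T2_cont :: "'a set \<Rightarrow> ('a \<Rightarrow> 'a \<Rightarrow> real) \<Rightarrow> ('a \<Rightarrow> real) \<Rightarrow> ('a \<Rightarrow> real) \<Rightarrow> real \<Rightarrow> ereal" where
  "T2_cont S L \<pi> \<mu> \<epsilon> = (INF t\<in>{t::real. 0 \<le> t \<and> d2_cont S L \<pi> \<mu> t \<le> \<epsilon>}. ereal t)"

definition cutoff_disc :: "(nat \<Rightarrow> nat \<Rightarrow> real) \<Rightarrow> bool" where
  "cutoff_disc d \<longleftrightarrow> (\<exists>t::nat \<Rightarrow> real. (\<forall>n. t n > 0) \<and>
     (\<forall>a. 0 < a \<and> a < 1 \<longrightarrow>
        (\<lambda>n. d n (nat \<lceil>(1 + a) * t n\<rceil>)) \<longlonglongrightarrow> 0 \<and>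
        filterlim (\<lambda>n. d n (nat \<lfloor>(1 - a) * t n\<rfloor>)) at_top sequentially))"

definition precutoff_disc :: "(nat \<Rightarrow> nat \<Rightarrow> real) \<Rightarrow> bool" where
  "precutoff_disc d \<longleftrightarrow> (\<exists>(t::nat \<Rightarrow> real) A B. (\<forall>n. t n > 0) \<and> 0 < A \<and> A < B \<and>
     limsup (\<lambda>n. ereal (d n (nat \<lceil>B * t n\<rceil>))) = 0 \<and>
     liminf (\<lambda>n. ereal (d n (nat \<lfloor>A * t n\<rfloor>))) > 0)"

definition cutoff_cont :: "(nat \<Rightarrow> real \<Rightarrow> real) \<Rightarrow> bool" where
  "cutoff_cont d \<longleftrightarrow> (\<exists>t::nat \<Rightarrow> real. (\<forall>n. t n > 0) \<and>
     (\<forall>a. 0 < a \<and> a < 1 \<longrightarrow>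
        (\<lambda>n. d n ((1 + a) * t n)) \<longlonglongrightarrow> 0 \<and>
        filterlim (\<lambda>n. d n ((1 - a) * t n)) at_top sequentially))"

definition precutoff_cont :: "(nat \<Rightarrow> real \<Rightarrow> real) \<Rightarrow> bool" where
  "precutoff_cont d \<longleftrightarrow> (\<exists>(t::nat \<Rightarrow> real) A B. (\<forall>n. t n > 0) \<and> 0 < A \<and> A < B \<and>
     limsup (\<lambda>n. ereal (d n (B * t n))) = 0 \<and>
     liminf (\<lambda>n. ereal (d n (A * t n))) > 0)"

end

theory Submission
  imports Defs
begin


lemma limsup0_tendsto:
  fixes x :: "nat \<Rightarrow> real"
  assumes "\<And>n. x n \<ge> 0" "limsup (\<lambda>n. ereal (x n)) = 0"
  shows "x \<longlonglongrightarrow> 0"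
proof -
  have "liminf (\<lambda>n. ereal (x n)) \<ge> 0"
    by (rule Liminf_bounded) (use assms in auto)
  moreover have "liminf (\<lambda>n. ereal (x n)) \<le> limsup (\<lambda>n. ereal (x n))"
    by (rule Liminf_le_Limsup) simp
  ultimately have "liminf (\<lambda>n. ereal (x n)) = 0" using assms by simp
  then have "(\<lambda>n. ereal (x n)) \<longlonglongrightarrow> 0"
    using assms tendsto_iff_Liminf_eq_Limsup[OF trivial_limit_sequentially] by blast
  then have "(\<lambda>n. ereal (x n)) \<longlonglongrightarrow> ereal 0" by (simp add: zero_ereal_def)
  then show ?thesis by (simp only: lim_ereal)
qed

lemma liminf_pos_D:
  fixes x :: "nat \<Rightarrow> real"
  assumes "liminf (\<lambda>n. ereal (x n)) > 0"
  shows "\<exists>\<delta>>0. eventually (\<lambda>n. \<delta> < x n) sequentially"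
proof -
  obtain z where z: "0 < ereal z" "ereal z < liminf (\<lambda>n. ereal (x n))"
    using ereal_dense2[OF assms] by blast
  then have "eventually (\<lambda>n. ereal z < ereal (x n)) sequentially"
    using less_LiminfD by blast
  then show ?thesis using z by (intro exI[of _ z]) (auto elim: eventually_mono)
qed

lemma tendsto0_limsup:
  fixes x :: "nat \<Rightarrow> real"
  assumes "x \<longlonglongrightarrow> 0"
  shows "limsup (\<lambda>n. ereal (x n)) = 0"
proof -
  have "(\<lambda>n. ereal (x n)) \<longlonglongrightarrow> ereal 0" using assms by simp
  then have "limsup (\<lambda>n. ereal (x n)) = ereal 0"
    by (rule lim_imp_Limsup[OF trivial_limit_sequentially])
  then show ?thesis by (simp add: zero_ereal_def)
qed

lemma attop_liminf:
  fixes x :: "nat \<Rightarrow> real"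
  assumes "filterlim x at_top sequentially"
  shows "liminf (\<lambda>n. ereal (x n)) > 0"
proof -
  have "(\<lambda>n. ereal (x n)) \<longlonglongrightarrow> \<infinity>"
    unfolding tendsto_PInfty
  proof
    fix r
    have "eventually (\<lambda>n. r + 1 \<le> x n) sequentially"
      using assms filterlim_at_top by blast
    then show "eventually (\<lambda>n. ereal r < ereal (x n)) sequentially"
      by (auto elim: eventually_mono)
  qed
  then have "liminf (\<lambda>n. ereal (x n)) = \<infinity>" by (rule lim_imp_Liminf[OF trivial_limit_sequentially])
  then show ?thesis by simp
qed

lemma cutoff_cont_pre: "cutoff_cont d \<Longrightarrow> precutoff_cont d"
proof -
  assume "cutoff_cont d"
  then obtain t :: "nat \<Rightarrow> real" where t: "\<forall>n. t n > 0" and h: "\<And>a. 0 < a \<and> a < 1 \<Longrightarrow>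
        (\<lambda>n. d n ((1 + a) * t n)) \<longlonglongrightarrow> 0 \<and>
        filterlim (\<lambda>n. d n ((1 - a) * t n)) at_top sequentially"
    unfolding cutoff_cont_def by blast
  have h2: "(\<lambda>n. d n ((1 + 1/2) * t n)) \<longlonglongrightarrow> 0 \<and>
        filterlim (\<lambda>n. d n ((1 - 1/2) * t n)) at_top sequentially" by (rule h) simp
  have e1: "(1 + 1/2 :: real) = 3/2" "(1 - 1/2 :: real) = 1/2" by simp_all
  have "limsup (\<lambda>n. ereal (d n ((3/2) * t n))) = 0"
    by (rule tendsto0_limsup) (use h2 e1 in simp)
  moreover have "liminf (\<lambda>n. ereal (d n ((1/2) * t n))) > 0"
    by (rule attop_liminf) (use h2 e1 in simp)
  ultimately show ?thesis unfolding precutoff_cont_def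
    using t by (intro exI[of _ t] exI[of _ "1/2"] exI[of _ "3/2"]) simp
qed

lemma cutoff_disc_pre: "cutoff_disc d \<Longrightarrow> precutoff_disc d"
proof -
  assume "cutoff_disc d"
  then obtain t :: "nat \<Rightarrow> real" where t: "\<forall>n. t n > 0" and h: "\<And>a. 0 < a \<and> a < 1 \<Longrightarrow>
        (\<lambda>n. d n (nat \<lceil>(1 + a) * t n\<rceil>)) \<longlonglongrightarrow> 0 \<and>
        filterlim (\<lambda>n. d n (nat \<lfloor>(1 - a) * t n\<rfloor>)) at_top sequentially"
    unfolding cutoff_disc_def by blast
  have h2: "(\<lambda>n. d n (nat \<lceil>(1 + 1/2) * t n\<rceil>)) \<longlonglongrightarrow> 0 \<and>
        filterlim (\<lambda>n. d n (nat \<lfloor>(1 - 1/2) * t n\<rfloor>)) at_top sequentially" by (rule h) simp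
  have e1: "(1 + 1/2 :: real) = 3/2" "(1 - 1/2 :: real) = 1/2" by simp_all
  have "limsup (\<lambda>n. ereal (d n (nat \<lceil>(3/2) * t n\<rceil>))) = 0"
    by (rule tendsto0_limsup) (use h2 e1 in simp)
  moreover have "liminf (\<lambda>n. ereal (d n (nat \<lfloor>(1/2) * t n\<rfloor>))) > 0"
    by (rule attop_liminf) (use h2 e1 in simp)
  ultimately show ?thesis unfolding precutoff_disc_def
    using t by (intro exI[of _ t] exI[of _ "1/2"] exI[of _ "3/2"]) simp
qed



lemma chord:
  fixes g :: "real \<Rightarrow> real"
  assumes cv: "convex_on {0..} g" and "0 \<le> x" "x \<le> y" "y \<le> z" "x < z"
  shows "(z - x) * g y \<le> (z - y) * g x + (y - x) * g z"
proof -
  define u where "u = (y - x) / (z - x)"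
  have u: "0 \<le> u" "u \<le> 1" using assms by (auto simp: u_def field_simps)
  have zx: "z - x > 0" using assms by simp
  have "u * (z - x) = y - x" using zx by (simp add: u_def)
  then have yy: "(1 - u) *\<^sub>R x + u *\<^sub>R z = y" by (simp add: algebra_simps)
  have "g y \<le> (1 - u) * g x + u * g z"
    using convex_onD[OF cv u, of x z] assms yy by simp
  then have "(z - x) * g y \<le> (z - x) * ((1 - u) * g x + u * g z)"
    using assms by (intro mult_left_mono) auto
  also have "\<dots> = ((z - x) - u * (z - x)) * g x + (u * (z - x)) * g z"
    by (simp add: algebra_simps)
  also have "\<dots> = (z - y) * g x + (y - x) * g z"
    using \<open>u * (z - x) = y - x\<close> by simp
  finally show ?thesis .
qed

lemma tendsto0_crit:
  fixes x :: "nat \<Rightarrow> real"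
  assumes "\<And>e. e > 0 \<Longrightarrow> eventually (\<lambda>n. 0 \<le> x n \<and> x n < e) sequentially"
  shows "x \<longlonglongrightarrow> 0"
  unfolding tendsto_iff dist_real_def
proof (intro allI impI)
  fix e :: real assume "e > 0"
  then show "eventually (\<lambda>n. \<bar>x n - 0\<bar> < e) sequentially"
    using assms[of e] by (auto elim: eventually_mono)
qed

lemma cont_core:
  fixes d :: "nat \<Rightarrow> real \<Rightarrow> real"
  assumes nn: "\<And>n t. d n t \<ge> 0"
    and ev: "eventually (\<lambda>n. (\<forall>t\<ge>0. d n t > 0) \<and> convex_on {0..} (\<lambda>t. ln (d n t))
       \<and> (\<forall>s t. 0 \<le> s \<longrightarrow> s \<le> t \<longrightarrow> d n t \<le> d n s) \<and> continuous_on {0..} (d n)) sequentially"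
    and pc: "precutoff_cont d"
  shows "cutoff_cont d"
proof -
  obtain t A B where t: "\<forall>n. t n > 0" and AB: "0 < A" "A < B"
    and ls: "limsup (\<lambda>n. ereal (d n (B * t n))) = 0"
    and li: "liminf (\<lambda>n. ereal (d n (A * t n))) > 0"
    using pc unfolding precutoff_cont_def by blast
  have dB: "(\<lambda>n. d n (B * t n)) \<longlonglongrightarrow> 0" by (rule limsup0_tendsto[OF nn ls])
  obtain \<delta> where \<delta>: "\<delta> > 0" "eventually (\<lambda>n. \<delta> < d n (A * t n)) sequentially"
    using liminf_pos_D[OF li] by blast
  define l where "l = ln \<delta> - 1"
  define g where "g n s = ln (d n s)" for n s
  have evB: "eventually (\<lambda>n. d n (B * t n) < e) sequentially" if "e > 0" for e
    using dB that nn unfolding tendsto_iff dist_real_def by (auto elim: eventually_mono)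
  define P where "P n \<longleftrightarrow> ((\<forall>t\<ge>0. d n t > 0) \<and> convex_on {0..} (g n)
       \<and> (\<forall>s t. 0 \<le> s \<longrightarrow> s \<le> t \<longrightarrow> d n t \<le> d n s) \<and> continuous_on {0..} (d n))
       \<and> \<delta> < d n (A * t n) \<and> d n (B * t n) < exp l" for n
  have evP: "eventually P sequentially"
    using eventually_conj[OF eventually_conj[OF ev \<delta>(2)] evB[of "exp l"]]
    unfolding P_def g_def by (auto elim: eventually_mono)
  have tau_ex: "\<exists>\<tau>. A * t n \<le> \<tau> \<and> \<tau> < B * t n \<and> g n \<tau> = l" if "P n" for n
  proof -
    have pos: "\<forall>s\<ge>0. d n s > 0" and cv: "continuous_on {0..} (d n)"
      and mono: "\<forall>s t. 0 \<le> s \<longrightarrow> s \<le> t \<longrightarrow> d n t \<le> d n s"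
      and dA: "\<delta> < d n (A * t n)" and dB': "d n (B * t n) < exp l"
      using that unfolding P_def by auto
    have At: "0 \<le> A * t n" "A * t n \<le> B * t n" using AB t[rule_format, of n] by auto
    have gA: "l \<le> g n (A * t n)"
      using dA \<delta> unfolding g_def l_def
      by (smt (verit) ln_less_cancel_iff pos At(1))
    have gB: "g n (B * t n) < l"
      using dB' pos At unfolding g_def
      by (smt (verit) ln_exp ln_less_cancel_iff)
    have cont: "\<forall>x. A * t n \<le> x \<and> x \<le> B * t n \<longrightarrow> isCont (g n) x"
    proof (intro allI impI)
      fix x assume x: "A * t n \<le> x \<and> x \<le> B * t n"
      have "0 < A * t n" using AB t[rule_format, of n] by simp
      then have x0: "x \<in> {0<..}" using x by auto
      have "isCont (d n) x"
        using cv x0 continuous_on_interior[of "{0..}" "d n" x] by (auto simp: interior_Ici[of "-1::real" 0])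
      moreover have "d n x \<noteq> 0" using pos x0 by (simp add: less_imp_le order_less_imp_not_eq2)
      ultimately show "isCont (g n) x" unfolding g_def
        by (auto intro!: continuous_intros)
    qed
    obtain \<tau> where \<tau>: "A * t n \<le> \<tau>" "\<tau> \<le> B * t n" "g n \<tau> = l"
      using IVT2[of "g n" "B * t n" l "A * t n", OF _ gA At(2) cont] gB by auto
    moreover have "\<tau> \<noteq> B * t n" using \<tau>(3) gB by auto
    ultimately show ?thesis by (intro exI[of _ \<tau>]) auto
  qed
  define \<tau> where "\<tau> n = (if P n then (SOME \<tau>. A * t n \<le> \<tau> \<and> \<tau> < B * t n \<and> g n \<tau> = l) else 1)" for n
  have \<tau>P: "A * t n \<le> \<tau> n \<and> \<tau> n < B * t n \<and> g n (\<tau> n) = l" if "P n" for n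
    using someI_ex[OF tau_ex[OF that]] that unfolding \<tau>_def by simp
  have \<tau>pos: "\<tau> n > 0" for n
  proof (cases "P n")
    case True then show ?thesis using \<tau>P[OF True] AB t[rule_format, of n]
      by (smt (verit) mult_pos_pos)
  next
    case False then show ?thesis unfolding \<tau>_def by simp
  qed
  have rinf: "eventually (\<lambda>n. M < l - g n (B * t n)) sequentially" for M
  proof -
    have "eventually (\<lambda>n. d n (B * t n) < exp (l - M)) sequentially" by (rule evB) simp
    then show ?thesis using evP
    proof (eventually_elim)
      case (elim n)
      then have "d n (B * t n) > 0" using AB t[rule_format, of n] unfolding P_def
        by (smt (verit) mult_pos_pos)
      then have "g n (B * t n) < l - M" using elim(1) unfolding g_def
        by (metis ln_exp ln_less_cancel_iff exp_gt_zero)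
      then show ?case by simp
    qed
  qed
  show ?thesis unfolding cutoff_cont_def
  proof (intro exI[of _ \<tau>] conjI allI impI)
    show "0 < \<tau> n" for n by (rule \<tau>pos)
    fix a :: real assume a: "0 < a \<and> a < 1"
    define \<kappa> where "\<kappa> = a * A / (B - A)"
    have \<kappa>: "\<kappa> > 0" using a AB by (simp add: \<kappa>_def)
    define \<kappa>' where "\<kappa>' = min 1 \<kappa>"
    have \<kappa>': "\<kappa>' > 0" "\<kappa>' \<le> 1" "\<kappa>' \<le> \<kappa>" using \<kappa> by (auto simp: \<kappa>'_def)
    have low: "g n ((1 - a) * \<tau> n) \<ge> l + \<kappa> * (l - g n (B * t n))"
      and up: "g n ((1 + a) * \<tau> n) \<le> l - \<kappa>' * (l - g n (B * t n))"
      if Pn: "P n" for n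
    proof -
      have pos: "\<forall>s\<ge>0. d n s > 0" and cv: "convex_on {0..} (g n)"
        and mono: "\<forall>s t. 0 \<le> s \<longrightarrow> s \<le> t \<longrightarrow> d n t \<le> d n s"
        and dB': "d n (B * t n) < exp l"
        using Pn unfolding P_def by auto
      have tn: "t n > 0" using t by auto
      let ?T = "\<tau> n" let ?b = "B * t n"
      have T: "A * t n \<le> ?T" "?T < ?b" "g n ?T = l" using \<tau>P[OF Pn] by auto
      have T0: "?T > 0" by (rule \<tau>pos)
      have gB: "g n ?b < l"
        using dB' pos AB tn unfolding g_def
        by (smt (verit) ln_exp ln_less_cancel_iff mult_pos_pos)
      have ratio: "\<kappa> * (?b - ?T) \<le> a * ?T"
      proof -
        have "?b - ?T \<le> (B - A) * t n" using T by (simp add: algebra_simps)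
        then have "\<kappa> * (?b - ?T) \<le> \<kappa> * ((B - A) * t n)" using \<kappa> by (intro mult_left_mono) auto
        also have "\<dots> = a * (A * t n)" using AB by (simp add: \<kappa>_def field_simps)
        also have "\<dots> \<le> a * ?T" using a T by (intro mult_left_mono) auto
        finally show ?thesis .
      qed
      have bT: "?b - ?T > 0" using T by simp
      have aT: "a * ?T > 0" using a T0 by simp
      have c1: "(?b - (1 - a) * ?T) * g n ?T \<le> (?b - ?T) * g n ((1 - a) * ?T) + (?T - (1 - a) * ?T) * g n ?b"
      proof (rule chord[OF cv])
        show "0 \<le> (1 - a) * ?T" using a T0 by simp
        show "(1 - a) * ?T \<le> ?T" using aT by (simp add: algebra_simps)
        show "?T \<le> ?b" using T by simp
        show "(1 - a) * ?T < ?b" using aT T by (simp add: algebra_simps)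
      qed
      have "(?b - ?T) * (l + \<kappa> * (l - g n ?b)) \<le> (?b - ?T) * l + (a * ?T) * (l - g n ?b)"
        using ratio gB by (smt (verit) mult_right_mono distrib_left mult.commute mult.assoc)
      also have "\<dots> \<le> (?b - ?T) * g n ((1 - a) * ?T)"
        using c1 T by (simp add: algebra_simps)
      finally have "(?b - ?T) * (l + \<kappa> * (l - g n ?b)) \<le> (?b - ?T) * g n ((1 - a) * ?T)" .
      then show "g n ((1 - a) * ?T) \<ge> l + \<kappa> * (l - g n ?b)"
        using bT by (simp add: mult_le_cancel_left_pos)
      show "g n ((1 + a) * ?T) \<le> l - \<kappa>' * (l - g n ?b)"
      proof (cases "(1 + a) * ?T \<le> ?b")
        case True
        have c2: "(?b - ?T) * g n ((1 + a) * ?T) \<le> (?b - (1 + a) * ?T) * g n ?T + ((1 + a) * ?T - ?T) * g n ?b"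
        proof (rule chord[OF cv])
          show "0 \<le> ?T" using T0 by simp
          show "?T \<le> (1 + a) * ?T" using aT by (simp add: algebra_simps)
          show "(1 + a) * ?T \<le> ?b" using True by simp
          show "?T < ?b" using T by simp
        qed
        have "(?b - ?T) * g n ((1 + a) * ?T) \<le> (?b - ?T) * l - (a * ?T) * (l - g n ?b)"
          using c2 T by (simp add: algebra_simps)
        also have "\<dots> \<le> (?b - ?T) * l - (\<kappa> * (?b - ?T)) * (l - g n ?b)"
          using ratio gB by (intro diff_left_mono mult_right_mono) auto
        also have "\<dots> \<le> (?b - ?T) * (l - \<kappa>' * (l - g n ?b))"
          using \<kappa>' gB bT by (smt (verit) mult_right_mono mult_left_mono right_diff_distrib mult.commute mult.assoc)
        finally show ?thesis using bT by (simp add: mult_le_cancel_left_pos)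
      next
        case False
        have "d n ((1 + a) * ?T) \<le> d n ?b" using mono False AB tn by auto
        moreover have "d n ((1 + a) * ?T) > 0" using pos a T0 by auto
        ultimately have "g n ((1 + a) * ?T) \<le> g n ?b" unfolding g_def by simp
        also have "\<dots> \<le> l - \<kappa>' * (l - g n ?b)"
          using \<kappa>' gB by (smt (verit) mult_right_mono mult_left_le_one_le)
        finally show ?thesis .
      qed
    qed
    show "(\<lambda>n. d n ((1 + a) * \<tau> n)) \<longlonglongrightarrow> 0"
    proof (rule tendsto0_crit)
      fix e :: real assume e: "e > 0"
      have "eventually (\<lambda>n. (l - ln e) / \<kappa>' < l - g n (B * t n)) sequentially" by (rule rinf)
      then show "eventually (\<lambda>n. 0 \<le> d n ((1 + a) * \<tau> n) \<and> d n ((1 + a) * \<tau> n) < e) sequentially"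
        using evP
      proof eventually_elim
        case (elim n)
        have pos: "d n ((1 + a) * \<tau> n) > 0" using elim(2) \<tau>pos[of n] a unfolding P_def by auto
        have "l - \<kappa>' * (l - g n (B * t n)) < ln e"
          using elim(1) \<kappa>' by (simp add: field_simps)
        then have "g n ((1 + a) * \<tau> n) < ln e" using up[OF elim(2)] by simp
        then have "d n ((1 + a) * \<tau> n) < e" unfolding g_def using pos e by simp
        then show ?case using pos by simp
      qed
    qed
    show "filterlim (\<lambda>n. d n ((1 - a) * \<tau> n)) at_top sequentially"
      unfolding filterlim_at_top
    proof
      fix Z :: real
      have "eventually (\<lambda>n. (ln (max Z 1) - l) / \<kappa> < l - g n (B * t n)) sequentially" by (rule rinf)
      then show "eventually (\<lambda>n. Z \<le> d n ((1 - a) * \<tau> n)) sequentially"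
        using evP
      proof eventually_elim
        case (elim n)
        have pos: "d n ((1 - a) * \<tau> n) > 0" using elim(2) \<tau>pos[of n] a unfolding P_def by auto
        have "ln (max Z 1) < l + \<kappa> * (l - g n (B * t n))"
          using elim(1) \<kappa> by (simp add: field_simps)
        then have "ln (max Z 1) < g n ((1 - a) * \<tau> n)" using low[OF elim(2)] by simp
        then have "max Z 1 < d n ((1 - a) * \<tau> n)" unfolding g_def using pos
          by (metis ln_less_cancel_iff max.strict_coboundedI2 zero_less_one)
        then show ?case by simp
      qed
    qed
  qed
qed



lemma dchord:
  fixes g :: "nat \<Rightarrow> real"
  assumes cv: "\<And>m. 2 * g (Suc m) \<le> g m + g (Suc (Suc m))"
    and ij: "i \<le> j" and jk: "j \<le> k"
  shows "(real k - real i) * g j \<le> (real k - real j) * g i + (real j - real i) * g k"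
proof -
  define D where "D m = g (Suc m) - g m" for m
  have Dm: "D m \<le> D m'" if "m \<le> m'" for m m'
  proof (rule lift_Suc_mono_le[of D, OF _ that])
    fix n show "D n \<le> D (Suc n)" using cv[of n] by (simp add: D_def)
  qed
  have s1: "g j - g i = (\<Sum>m = i..<j. D m)" using ij unfolding D_def by (simp add: sum_Suc_diff')
  have s2: "g k - g j = (\<Sum>m = j..<k. D m)" using jk unfolding D_def by (simp add: sum_Suc_diff')
  have b1: "g j - g i \<le> (real j - real i) * D j"
  proof -
    have "(\<Sum>m = i..<j. D m) \<le> of_nat (card {i..<j}) * D j"
      by (rule sum_bounded_above) (auto intro: Dm)
    then show ?thesis using s1 ij by (simp add: of_nat_diff)
  qed
  have b2: "(real k - real j) * D j \<le> g k - g j"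
  proof -
    have "of_nat (card {j..<k}) * D j \<le> (\<Sum>m = j..<k. D m)"
      by (rule sum_bounded_below) (auto intro: Dm)
    then show ?thesis using s2 jk by (simp add: of_nat_diff)
  qed
  have kj: "real k - real j \<ge> 0" "real j - real i \<ge> 0" using ij jk by auto
  have "(real k - real j) * (g j - g i) \<le> (real k - real j) * ((real j - real i) * D j)"
    using b1 kj by (intro mult_left_mono) auto
  also have "\<dots> = (real j - real i) * ((real k - real j) * D j)" by simp
  also have "\<dots> \<le> (real j - real i) * (g k - g j)"
    using b2 kj by (intro mult_left_mono) auto
  finally show ?thesis by (simp add: algebra_simps)
qed

lemma disc_core:
  fixes d :: "nat \<Rightarrow> nat \<Rightarrow> real" and \<epsilon>0 :: real
  assumes nn: "\<And>n m. d n m \<ge> 0"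
    and ev: "eventually (\<lambda>n. (\<forall>m. d n m > 0) \<and> (\<forall>m. d n (Suc m) \<le> d n m)
       \<and> (\<forall>m. 2 * ln (d n (Suc m)) \<le> ln (d n m) + ln (d n (Suc (Suc m))))) sequentially"
    and e0: "\<epsilon>0 > 0"
    and T: "\<And>M. eventually (\<lambda>n. \<forall>m\<le>M. \<epsilon>0 < d n m) sequentially"
    and pc: "precutoff_disc d"
  shows "cutoff_disc d"
proof -
  obtain t :: "nat \<Rightarrow> real" and A B :: real where t: "\<forall>n. t n > 0" and AB: "0 < A" "A < B"
    and ls: "limsup (\<lambda>n. ereal (d n (nat \<lceil>B * t n\<rceil>))) = 0"
    and li: "liminf (\<lambda>n. ereal (d n (nat \<lfloor>A * t n\<rfloor>))) > 0"
    using pc unfolding precutoff_disc_def by auto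
  define q where "q n = nat \<lceil>B * t n\<rceil>" for n
  define p where "p n = nat \<lfloor>A * t n\<rfloor>" for n
  have dq: "(\<lambda>n. d n (q n)) \<longlonglongrightarrow> 0" unfolding q_def by (rule limsup0_tendsto[OF nn ls])
  obtain \<delta> where \<delta>: "\<delta> > 0" "eventually (\<lambda>n. \<delta> < d n (p n)) sequentially"
    using liminf_pos_D[OF li] unfolding p_def by blast
  define l where "l = ln \<delta> - 1"
  define g where "g n m = ln (d n m)" for n m
  have evq: "eventually (\<lambda>n. d n (q n) < e) sequentially" if "e > 0" for e
    using dq that nn unfolding tendsto_iff dist_real_def by (auto elim: eventually_mono)
  have tinf: "eventually (\<lambda>n. M \<le> t n) sequentially" for M
  proof -
    define N where "N = nat \<lceil>B * M\<rceil> + 1"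
    have "eventually (\<lambda>n. d n (q n) < \<epsilon>0 \<and> (\<forall>m\<le>N. \<epsilon>0 < d n m)) sequentially"
      using eventually_conj[OF evq[OF e0] T[of N]] by simp
    then show ?thesis
    proof eventually_elim
      case (elim n)
      have "\<not> q n \<le> N"
      proof
        assume "q n \<le> N"
        then have "\<epsilon>0 < d n (q n)" using elim by blast
        then show False using elim by linarith
      qed
      then have "real N < real (q n)" by simp
      also have "real (q n) < B * t n + 1"
      proof -
        have bt: "0 < B * t n" using t[rule_format, of n] AB by simp
        have c0: "0 \<le> \<lceil>B * t n\<rceil>" using bt by simp
        have "real (q n) = of_int \<lceil>B * t n\<rceil>" unfolding q_def using c0 by simp
        then show ?thesis using ceiling_correct[of "B * t n"] by linarith
      qed
      finally have "real (nat \<lceil>B * M\<rceil>) < B * t n" unfolding N_def by simp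
      moreover have "B * M \<le> real (nat \<lceil>B * M\<rceil>)" by linarith
      ultimately have "B * M < B * t n" by linarith
      then show ?case using AB by simp
    qed
  qed
  define T0 where "T0 = max (2 / A) (2 / (B - A))"
  define P where "P n \<longleftrightarrow> ((\<forall>m. d n m > 0) \<and> (\<forall>m. d n (Suc m) \<le> d n m)
       \<and> (\<forall>m. 2 * g n (Suc m) \<le> g n m + g n (Suc (Suc m))))
       \<and> \<delta> < d n (p n) \<and> d n (q n) < exp l \<and> T0 \<le> t n" for n
  have evP: "eventually P sequentially"
    using eventually_conj[OF eventually_conj[OF eventually_conj[OF ev \<delta>(2)] evq[OF exp_gt_zero[of l]]] tinf[of T0]]
    unfolding P_def g_def by (rule eventually_mono) blast
  have Ppos: "d n m > 0" and Pmono: "d n (Suc m) \<le> d n m"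
    and Pcv: "2 * g n (Suc m) \<le> g n m + g n (Suc (Suc m))"
    and PdA: "\<delta> < d n (p n)" and Pdq: "d n (q n) < exp l" and PT0: "T0 \<le> t n"
    if "P n" for n m using that unfolding P_def by blast+
  have basic: "p n \<ge> 1 \<and> real (p n) \<ge> A * t n / 2 \<and> real (q n) - real (p n) \<le> 2 * (B - A) * t n
      \<and> real (p n) \<le> A * t n \<and> B * t n \<le> real (q n)" if "T0 \<le> t n" for n
  proof -
    have tn: "t n > 0" using t by auto
    have i1: "2 / A \<le> t n" "2 / (B - A) \<le> t n" using that unfolding T0_def by simp_all
    have BA: "B - A > 0" using AB by simp
    have h1: "2 \<le> A * t n" "2 \<le> (B - A) * t n"
      using i1 AB(1) BA by (simp_all add: pos_divide_le_eq mult.commute)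
    have f0: "0 \<le> \<lfloor>A * t n\<rfloor>" using h1 by simp
    have rp: "real (p n) = of_int \<lfloor>A * t n\<rfloor>" unfolding p_def using f0 by simp
    have fp: "real (p n) > A * t n - 1" "real (p n) \<le> A * t n"
      using rp floor_correct[of "A * t n"] by linarith+
    have bt: "0 < B * t n" using tn AB by simp
    have c0: "0 \<le> \<lceil>B * t n\<rceil>" using bt by simp
    have rq: "real (q n) = of_int \<lceil>B * t n\<rceil>" unfolding q_def using c0 by simp
    have fq: "real (q n) < B * t n + 1" "B * t n \<le> real (q n)"
      using rq ceiling_correct[of "B * t n"] by linarith+
    have p1: "real (p n) \<ge> 1" using fp h1 by linarith
    then have "p n \<ge> 1" by simp
    moreover have "real (p n) \<ge> A * t n / 2" using fp h1 by linarith
    moreover have "real (q n) - real (p n) \<le> 2 * (B - A) * t n"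
    proof -
      have "(B - A) * t n = B * t n - A * t n" by (simp add: algebra_simps)
      then show ?thesis using fp fq h1 by linarith
    qed
    ultimately show ?thesis using fp fq by blast
  qed
  have antim: "d n m' \<le> d n m" if "P n" "m \<le> m'" for n m m'
    using lift_Suc_antimono_le[of "d n", OF Pmono[OF that(1)] that(2)] .
  have Pfacts: "p n < q n \<and> l < g n (p n) \<and> g n (q n) < l" if Pn: "P n" for n
  proof -
    have pos: "\<forall>m. d n m > 0" and dp: "\<delta> < d n (p n)" and dq': "d n (q n) < exp l"
      using Pn Ppos PdA Pdq by auto
    have "ln \<delta> < ln (d n (p n))" using dp \<delta>(1) by (subst ln_less_cancel_iff) auto
    then have gp: "l < g n (p n)" unfolding g_def l_def by simp
    have "ln (d n (q n)) < ln (exp l)" using dq' pos by (subst ln_less_cancel_iff) auto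
    then have gq: "g n (q n) < l" unfolding g_def by simp
    have "p n < q n"
    proof (rule ccontr)
      assume "\<not> p n < q n"
      then have "d n (p n) \<le> d n (q n)" using antim[OF Pn, of "q n" "p n"] by simp
      then have "g n (p n) \<le> g n (q n)" using pos unfolding g_def by simp
      then show False using gp gq by simp
    qed
    then show ?thesis using gp gq by simp
  qed
  define \<tau> where "\<tau> n = (if P n then Max {m. m \<le> q n \<and> l \<le> g n m} else 1)" for n
  have \<tau>P: "p n \<le> \<tau> n \<and> \<tau> n < q n \<and> l \<le> g n (\<tau> n) \<and> g n (Suc (\<tau> n)) < l" if Pn: "P n" for n
  proof -
    let ?M = "{m. m \<le> q n \<and> l \<le> g n m}"
    have fin: "finite ?M" by (rule finite_subset[of _ "{..q n}"]) auto
    have PF: "p n < q n" "l < g n (p n)" "g n (q n) < l" using Pfacts[OF Pn] by auto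
    have pM: "p n \<in> ?M" using PF by simp
    have teq: "\<tau> n = Max ?M" using Pn unfolding \<tau>_def by simp
    have tM: "\<tau> n \<in> ?M" unfolding teq by (rule Max_in[OF fin]) (use pM in blast)
    have ge: "p n \<le> \<tau> n" unfolding teq by (rule Max_ge[OF fin pM])
    have tq: "\<tau> n \<le> q n" "l \<le> g n (\<tau> n)" using tM by simp_all
    have ne: "\<tau> n \<noteq> q n" using tq(2) PF(3) by auto
    have "g n (Suc (\<tau> n)) < l"
    proof (rule ccontr)
      assume "\<not> g n (Suc (\<tau> n)) < l"
      moreover have "Suc (\<tau> n) \<le> q n" using tq(1) ne by simp
      ultimately have "Suc (\<tau> n) \<in> ?M" by simp
      then have "Suc (\<tau> n) \<le> \<tau> n" unfolding teq by (rule Max_ge[OF fin])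
      then show False by simp
    qed
    then show ?thesis using ge tq ne by simp
  qed
  have \<tau>pos: "\<tau> n > 0" for n
  proof (cases "P n")
    case True then show ?thesis using \<tau>P[OF True] basic[OF PT0[OF True]] by auto
  next
    case False then show ?thesis unfolding \<tau>_def by simp
  qed
  have rinf: "eventually (\<lambda>n. M < l - g n (q n)) sequentially" for M
  proof -
    have "eventually (\<lambda>n. d n (q n) < exp (l - M)) sequentially" by (rule evq) simp
    then show ?thesis using evP
    proof (eventually_elim)
      case (elim n)
      then have "d n (q n) > 0" using Ppos by blast
      then have "g n (q n) < l - M" using elim(1) unfolding g_def
        by (metis ln_exp ln_less_cancel_iff exp_gt_zero)
      then show ?case by simp
    qed
  qed
  show ?thesis unfolding cutoff_disc_def
  proof (intro exI[of _ "\<lambda>n. real (\<tau> n)"] conjI allI impI)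
    show "0 < real (\<tau> n)" for n using \<tau>pos[of n] by simp
    fix a :: real assume a: "0 < a \<and> a < 1"
    define \<kappa> where "\<kappa> = a * A / (8 * (B - A))"
    have \<kappa>: "\<kappa> > 0" using a AB by (simp add: \<kappa>_def)
    define \<kappa>' where "\<kappa>' = min 1 \<kappa>"
    have \<kappa>': "\<kappa>' > 0" "\<kappa>' \<le> 1" "\<kappa>' \<le> \<kappa>" using \<kappa> by (auto simp: \<kappa>'_def)
    define Q where "Q n \<longleftrightarrow> P n \<and> 4 / (a * A) \<le> t n" for n
    have evQ: "eventually Q sequentially"
      using eventually_conj[OF evP tinf[of "4 / (a * A)"]] unfolding Q_def by simp
    have low: "g n (nat \<lfloor>(1 - a) * real (\<tau> n)\<rfloor>) \<ge> l + \<kappa> * (l - g n (q n))"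
      and up: "g n (nat \<lceil>(1 + a) * real (\<tau> n)\<rceil>) \<le> l - \<kappa>' * (l - g n (q n))"
      if Qn: "Q n" for n
    proof -
      have Pn: "P n" and ta: "4 / (a * A) \<le> t n" using Qn unfolding Q_def by auto
      have cv: "\<And>m. 2 * g n (Suc m) \<le> g n m + g n (Suc (Suc m))" using Pn Pcv by blast
      have pos: "\<And>m. d n m > 0" using Pn Ppos by blast
      have tn: "t n > 0" using t by auto
      have bs: "p n \<ge> 1" "real (p n) \<ge> A * t n / 2" "real (q n) - real (p n) \<le> 2 * (B - A) * t n"
        using basic[OF PT0[OF Pn]] by auto
      have TP: "p n \<le> \<tau> n" "\<tau> n < q n" "l \<le> g n (\<tau> n)" "g n (Suc (\<tau> n)) < l" using \<tau>P[OF Pn] by auto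
      have gq: "g n (q n) < l" using Pfacts[OF Pn] by simp
      let ?T = "real (\<tau> n)" let ?q = "real (q n)"
      have at4: "4 \<le> a * A * t n" using ta a AB by (auto simp: field_simps)
      have aT: "a * ?T \<ge> a * (A * t n / 2)"
        using TP(1) bs(2) a by (intro mult_left_mono) auto
      have aT2: "a * ?T \<ge> 2" using aT at4 by (simp add: algebra_simps)
      have qT: "?q - ?T \<le> 2 * (B - A) * t n" using TP(1) bs(3) by simp
      have k2: "\<kappa> * (2 * (B - A) * t n) = a * A * t n / 4" using AB by (simp add: \<kappa>_def field_simps)
      have e2: "a * (A * t n / 2) = (a * A * t n) / 2" by (simp add: algebra_simps)
      define s where "s = nat \<lfloor>(1 - a) * ?T\<rfloor>"
      have s1: "real s \<le> (1 - a) * ?T" unfolding s_def using a by simp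
      have "(1 - a) * ?T \<le> ?T" using aT2 by (simp add: algebra_simps)
      then have "real s \<le> ?T" using s1 by linarith
      then have sT: "s \<le> \<tau> n" by simp
      have c1: "(?q - real s) * g n (\<tau> n) \<le> (?q - ?T) * g n s + (?T - real s) * g n (q n)"
        using dchord[of "g n", OF cv sT, of "q n"] TP by simp
      have Ts: "?T - real s \<ge> \<kappa> * (?q - ?T)"
      proof -
        have "\<kappa> * (?q - ?T) \<le> \<kappa> * (2 * (B - A) * t n)" using qT \<kappa> by (intro mult_left_mono) auto
        also have "\<dots> \<le> a * ?T" using k2 aT e2 at4 by linarith
        also have "\<dots> \<le> ?T - real s" using s1 by (simp add: algebra_simps)
        finally show ?thesis .
      qed
      have qTpos: "?q - ?T > 0" using TP by simp
      have "(?q - ?T) * (l + \<kappa> * (l - g n (q n))) = (?q - ?T) * l + (\<kappa> * (?q - ?T)) * (l - g n (q n))"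
        by (simp add: algebra_simps)
      also have "\<dots> \<le> (?q - ?T) * l + (?T - real s) * (l - g n (q n))"
        using Ts gq by (intro add_left_mono mult_right_mono) auto
      also have "\<dots> = (?q - real s) * l - (?T - real s) * g n (q n)" by (simp add: algebra_simps)
      also have "\<dots> \<le> (?q - real s) * g n (\<tau> n) - (?T - real s) * g n (q n)"
        using TP(3) sT TP(2) by (intro diff_right_mono mult_left_mono) auto
      also have "\<dots> \<le> (?q - ?T) * g n s" using c1 by simp
      finally show "g n (nat \<lfloor>(1 - a) * real (\<tau> n)\<rfloor>) \<ge> l + \<kappa> * (l - g n (q n))"
        using qTpos unfolding s_def by (simp add: mult_le_cancel_left_pos)
      define v where "v = nat \<lceil>(1 + a) * ?T\<rceil>"
      have v1: "real v \<ge> (1 + a) * ?T" unfolding v_def by linarith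
      have vT: "real v \<ge> ?T + 2" using v1 aT2 by (simp add: algebra_simps)
      have "\<kappa>' * (l - g n (q n)) \<le> l - g n (q n)"
        by (rule mult_left_le_one_le) (use \<kappa>' gq in auto)
      then have fin: "g n (q n) \<le> l - \<kappa>' * (l - g n (q n))" by linarith
      have "g n v \<le> l - \<kappa>' * (l - g n (q n))"
      proof (cases "v \<le> q n")
        case vq: True
        have svT: "Suc (\<tau> n) \<le> v" using vT by simp
        have c2: "(?q - real (Suc (\<tau> n))) * g n v \<le> (?q - real v) * g n (Suc (\<tau> n)) + (real v - real (Suc (\<tau> n))) * g n (q n)"
          using dchord[of "g n", OF cv svT vq] by simp
        show ?thesis
        proof (cases "Suc (\<tau> n) = q n")
          case True
          then have "v = q n" using svT vq by simp
          then show ?thesis using fin by simp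
        next
          case False
          then have qpos: "?q - real (Suc (\<tau> n)) > 0" using TP by simp
          have vk: "real v - real (Suc (\<tau> n)) \<ge> \<kappa> * (?q - real (Suc (\<tau> n)))"
          proof -
            have "\<kappa> * (?q - real (Suc (\<tau> n))) \<le> \<kappa> * (2 * (B - A) * t n)" using qT \<kappa> by (intro mult_left_mono) auto
            also have "\<dots> = a * A * t n / 4" using k2 .
            also have "\<dots> \<le> a * ?T / 2" using aT e2 at4 by linarith
            also have "\<dots> \<le> real v - real (Suc (\<tau> n))" using v1 aT2 by (simp add: algebra_simps)
            finally show ?thesis .
          qed
          have "(?q - real (Suc (\<tau> n))) * g n v \<le> (?q - real v) * l + (real v - real (Suc (\<tau> n))) * g n (q n)"
          proof -
            have "(?q - real v) * g n (Suc (\<tau> n)) \<le> (?q - real v) * l"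
              using TP(4) vq by (intro mult_left_mono) auto
            then show ?thesis using c2 by linarith
          qed
          also have "\<dots> = (?q - real (Suc (\<tau> n))) * l - (real v - real (Suc (\<tau> n))) * (l - g n (q n))"
            by (simp add: algebra_simps)
          also have "\<dots> \<le> (?q - real (Suc (\<tau> n))) * l - (\<kappa> * (?q - real (Suc (\<tau> n)))) * (l - g n (q n))"
            using vk gq by (intro diff_left_mono mult_right_mono) auto
          also have "\<dots> \<le> (?q - real (Suc (\<tau> n))) * (l - \<kappa>' * (l - g n (q n)))"
          proof -
            have "\<kappa>' * ((?q - real (Suc (\<tau> n))) * (l - g n (q n))) \<le> \<kappa> * ((?q - real (Suc (\<tau> n))) * (l - g n (q n)))"
              by (rule mult_right_mono) (use \<kappa>' gq qpos in auto)
            then show ?thesis by (simp add: algebra_simps)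
          qed
          finally show ?thesis using qpos by (simp add: mult_le_cancel_left_pos)
        qed
      next
        case False
        then have "d n v \<le> d n (q n)" using antim[OF Pn] by simp
        then have "g n v \<le> g n (q n)" using pos unfolding g_def by simp
        then show ?thesis using fin by simp
      qed
      then show "g n (nat \<lceil>(1 + a) * real (\<tau> n)\<rceil>) \<le> l - \<kappa>' * (l - g n (q n))"
        unfolding v_def .
    qed
    show "(\<lambda>n. d n (nat \<lceil>(1 + a) * real (\<tau> n)\<rceil>)) \<longlonglongrightarrow> 0"
    proof (rule tendsto0_crit)
      fix e :: real assume e: "e > 0"
      have "eventually (\<lambda>n. (l - ln e) / \<kappa>' < l - g n (q n)) sequentially" by (rule rinf)
      then show "eventually (\<lambda>n. 0 \<le> d n (nat \<lceil>(1 + a) * real (\<tau> n)\<rceil>) \<and> d n (nat \<lceil>(1 + a) * real (\<tau> n)\<rceil>) < e) sequentially"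
        using evQ
      proof eventually_elim
        case (elim n)
        have pos: "d n (nat \<lceil>(1 + a) * real (\<tau> n)\<rceil>) > 0" using elim(2) Ppos unfolding Q_def by blast
        have "l - \<kappa>' * (l - g n (q n)) < ln e"
          using elim(1) \<kappa>' by (simp add: field_simps)
        then have "g n (nat \<lceil>(1 + a) * real (\<tau> n)\<rceil>) < ln e" using up[OF elim(2)] by simp
        then have "d n (nat \<lceil>(1 + a) * real (\<tau> n)\<rceil>) < e" unfolding g_def using pos e by simp
        then show ?case using pos by simp
      qed
    qed
    show "filterlim (\<lambda>n. d n (nat \<lfloor>(1 - a) * real (\<tau> n)\<rfloor>)) at_top sequentially"
      unfolding filterlim_at_top
    proof
      fix Z :: real
      have "eventually (\<lambda>n. (ln (max Z 1) - l) / \<kappa> < l - g n (q n)) sequentially" by (rule rinf)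
      then show "eventually (\<lambda>n. Z \<le> d n (nat \<lfloor>(1 - a) * real (\<tau> n)\<rfloor>)) sequentially"
        using evQ
      proof eventually_elim
        case (elim n)
        have pos: "d n (nat \<lfloor>(1 - a) * real (\<tau> n)\<rfloor>) > 0" using elim(2) Ppos unfolding Q_def by blast
        have "ln (max Z 1) < l + \<kappa> * (l - g n (q n))"
          using elim(1) \<kappa> by (simp add: field_simps)
        then have "ln (max Z 1) < g n (nat \<lfloor>(1 - a) * real (\<tau> n)\<rfloor>)" using low[OF elim(2)] by simp
        then have "max Z 1 < d n (nat \<lfloor>(1 - a) * real (\<tau> n)\<rfloor>)" unfolding g_def using pos
          by (metis ln_less_cancel_iff max.strict_coboundedI2 zero_less_one)
        then show ?case by simp
      qed
    qed
  qed
qed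



definition lop :: "'a set \<Rightarrow> ('a \<Rightarrow> 'a \<Rightarrow> real) \<Rightarrow> ('a \<Rightarrow> real) \<Rightarrow> 'a \<Rightarrow> real" where
  "lop S Q u y = (\<Sum>x\<in>S. Q y x * u x)"

definition ip :: "'a set \<Rightarrow> ('a \<Rightarrow> real) \<Rightarrow> ('a \<Rightarrow> real) \<Rightarrow> ('a \<Rightarrow> real) \<Rightarrow> real" where
  "ip S w u v = (\<Sum>y\<in>S. w y * u y * v y)"

lemma wCS:
  assumes "\<And>y. y \<in> S \<Longrightarrow> w y \<ge> 0"
  shows "(ip S w u v)\<^sup>2 \<le> ip S w u u * ip S w v v"
proof -
  have "(\<Sum>y\<in>S. (sqrt (w y) * u y) * (sqrt (w y) * v y))\<^sup>2
      \<le> (\<Sum>y\<in>S. (sqrt (w y) * u y)\<^sup>2) * (\<Sum>y\<in>S. (sqrt (w y) * v y)\<^sup>2)"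
    by (rule Cauchy_Schwarz_ineq_sum)
  moreover have "(\<Sum>y\<in>S. (sqrt (w y) * u y) * (sqrt (w y) * v y)) = ip S w u v"
    unfolding ip_def by (rule sum.cong) (use assms in \<open>auto simp: algebra_simps\<close>)
  moreover have "(\<Sum>y\<in>S. (sqrt (w y) * u y)\<^sup>2) = ip S w u u"
    unfolding ip_def by (rule sum.cong) (use assms in \<open>auto simp: power2_eq_square algebra_simps\<close>)
  moreover have "(\<Sum>y\<in>S. (sqrt (w y) * v y)\<^sup>2) = ip S w v v"
    unfolding ip_def by (rule sum.cong) (use assms in \<open>auto simp: power2_eq_square algebra_simps\<close>)
  ultimately show ?thesis by simp
qed

lemma ip_cong:
  assumes "\<And>y. y \<in> S \<Longrightarrow> u y = u' y" "\<And>y. y \<in> S \<Longrightarrow> v y = v' y"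
  shows "ip S w u v = ip S w u' v'"
  unfolding ip_def using assms by (intro sum.cong) auto

lemma ip_sym: "ip S w u v = ip S w v u"
  unfolding ip_def by (simp add: algebra_simps)

lemma ip_nonneg: "(\<And>y. y \<in> S \<Longrightarrow> w y \<ge> 0) \<Longrightarrow> ip S w u u \<ge> 0"
  unfolding ip_def by (intro sum_nonneg) (auto simp: mult.assoc intro!: mult_nonneg_nonneg)

lemma pi_sq_ip: "pi_sq S w u = ip S w u u"
  unfolding pi_sq_def ip_def by (intro sum.cong) (auto simp: power2_eq_square)

lemma selfadj:
  assumes rev: "reversible S Q w"
  shows "ip S w (lop S Q u) v = ip S w u (lop S Q v)"
proof -
  have "ip S w (lop S Q u) v = (\<Sum>y\<in>S. \<Sum>x\<in>S. w y * Q y x * u x * v y)"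
    unfolding ip_def lop_def by (simp add: sum_distrib_left sum_distrib_right algebra_simps)
  also have "\<dots> = (\<Sum>y\<in>S. \<Sum>x\<in>S. w x * Q x y * u x * v y)"
    using rev unfolding reversible_def by (intro sum.cong refl) auto
  also have "\<dots> = (\<Sum>x\<in>S. \<Sum>y\<in>S. w x * Q x y * u x * v y)" by (rule sum.swap)
  also have "\<dots> = ip S w u (lop S Q v)"
    unfolding ip_def lop_def by (simp add: sum_distrib_left sum_distrib_right algebra_simps)
  finally show ?thesis .
qed

lemma rowvec:
  assumes rev: "reversible S Q w" and pos: "\<And>x. x \<in> S \<Longrightarrow> w x > 0" and y: "y \<in> S"
  shows "(\<Sum>x\<in>S. \<nu> x * Q x y) / w y = lop S Q (\<lambda>x. \<nu> x / w x) y"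
  unfolding lop_def sum_divide_distrib
proof (rule sum.cong[OF refl])
  fix x assume x: "x \<in> S"
  have e: "w x * Q x y = w y * Q y x" using rev x y unfolding reversible_def by auto
  have "\<nu> x * Q x y / w y = \<nu> x * (w x * Q x y) / (w x * w y)"
    using pos[OF x] pos[OF y] by (simp add: field_simps)
  also have "\<dots> = Q y x * (\<nu> x / w x)" unfolding e using pos[OF x] pos[OF y] by (simp add: field_simps)
  finally show "\<nu> x * Q x y / w y = Q y x * (\<nu> x / w x)" .
qed

lemma mpow_nonneg:
  assumes "\<And>x y. x \<in> S \<Longrightarrow> y \<in> S \<Longrightarrow> Q x y \<ge> 0" "y \<in> S"
  shows "mpow S Q m x y \<ge> 0"
  using assms(2)
proof (induction m arbitrary: y)
  case 0 then show ?case by simp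
next
  case (Suc m) then show ?case using assms(1) by (auto intro!: sum_nonneg)
qed

lemma pi_pos_gen:
  assumes fin: "finite S" and nn: "\<And>x y. x \<in> S \<Longrightarrow> y \<in> S \<Longrightarrow> Q x y \<ge> 0"
    and irr: "irreducible_disc S Q" and prb: "prob_on S w"
    and bk: "\<And>x y. x \<in> S \<Longrightarrow> y \<in> S \<Longrightarrow> w y = 0 \<Longrightarrow> Q x y > 0 \<Longrightarrow> w x = 0"
  shows "\<And>y. y \<in> S \<Longrightarrow> w y > 0"
proof -
  have step: "\<forall>x\<in>S. \<forall>y\<in>S. mpow S Q m x y > 0 \<longrightarrow> w y = 0 \<longrightarrow> w x = 0" for m
  proof (induction m)
    case 0 then show ?case by auto
  next
    case (Suc m)
    show ?case
    proof (intro ballI impI)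
      fix x y assume x: "x \<in> S" and y: "y \<in> S" and p: "mpow S Q (Suc m) x y > 0" and wy: "w y = 0"
      have "\<exists>z\<in>S. mpow S Q m x z * Q z y > 0"
      proof (rule ccontr)
        assume "\<not> ?thesis"
        then have "(\<Sum>z\<in>S. mpow S Q m x z * Q z y) \<le> 0" by (intro sum_nonpos) (auto simp: not_less)
        then show False using p by simp
      qed
      then obtain z where z: "z \<in> S" "mpow S Q m x z * Q z y > 0" by blast
      have "mpow S Q m x z \<ge> 0" by (rule mpow_nonneg[OF nn z(1)])
      moreover have "Q z y \<ge> 0" using nn z(1) y .
      ultimately have "mpow S Q m x z > 0" "Q z y > 0" using z(2)
        by (simp_all add: zero_less_mult_iff)
      then have "w z = 0" using bk[OF z(1) y wy] by simp
      then show "w x = 0" using Suc.IH x z(1) \<open>mpow S Q m x z > 0\<close> by blast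
    qed
  qed
  have wnn: "\<And>y. y \<in> S \<Longrightarrow> w y \<ge> 0" using prb unfolding prob_on_def by auto
  fix y assume y: "y \<in> S"
  show "w y > 0"
  proof (rule ccontr)
    assume "\<not> w y > 0"
    then have wy: "w y = 0" using wnn[OF y] by simp
    have "\<forall>x\<in>S. w x = 0"
    proof
      fix x assume x: "x \<in> S"
      obtain m where "mpow S Q m x y > 0" using irr x y unfolding irreducible_disc_def by blast
      then show "w x = 0" using step[of m] x y wy by blast
    qed
    then have "sum w S = 0" by simp
    then show False using prb unfolding prob_on_def by simp
  qed
qed

lemma sq_minus1:
  assumes "finite S" "\<And>y. y \<in> S \<Longrightarrow> w y > 0" "sum \<nu> S = 1" "sum w S = 1"
  shows "pi_sq S w (\<lambda>y. \<nu> y / w y - 1) = pi_sq S w (\<lambda>y. \<nu> y / w y) - 1"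
proof -
  have "pi_sq S w (\<lambda>y. \<nu> y / w y - 1) = (\<Sum>y\<in>S. (\<nu> y / w y)\<^sup>2 * w y - 2 * \<nu> y + w y)"
    unfolding pi_sq_def
  proof (rule sum.cong[OF refl])
    fix y assume y: "y \<in> S"
    show "\<bar>\<nu> y / w y - 1\<bar>\<^sup>2 * w y = (\<nu> y / w y)\<^sup>2 * w y - 2 * \<nu> y + w y"
      using assms(2)[OF y] by (simp add: power2_eq_square field_simps)
  qed
  also have "\<dots> = pi_sq S w (\<lambda>y. \<nu> y / w y) - 2 * sum \<nu> S + sum w S"
    unfolding pi_sq_def by (simp del: abs_divide add: power2_abs sum.distrib sum_subtractf sum_distrib_left)
  finally show ?thesis using assms by simp
qed



lemma contraction:
  assumes st: "stochastic S K" and rev: "reversible S K w" and wnn: "\<And>y. y \<in> S \<Longrightarrow> w y \<ge> 0"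
  shows "ip S w (lop S K u) (lop S K u) \<le> ip S w u u"
proof -
  have Knn: "\<And>x y. x \<in> S \<Longrightarrow> y \<in> S \<Longrightarrow> K x y \<ge> 0" and Ks: "\<And>x. x \<in> S \<Longrightarrow> (\<Sum>y\<in>S. K x y) = 1"
    using st unfolding stochastic_def by auto
  have pt: "lop S K u y * lop S K u y \<le> (\<Sum>x\<in>S. K y x * u x * u x)" if y: "y \<in> S" for y
  proof -
    have "(ip S (K y) u (\<lambda>_. 1))\<^sup>2 \<le> ip S (K y) u u * ip S (K y) (\<lambda>_. 1) (\<lambda>_. 1)"
      by (rule wCS) (use Knn y in auto)
    moreover have "ip S (K y) u (\<lambda>_. 1) = lop S K u y" unfolding ip_def lop_def by simp
    moreover have "ip S (K y) (\<lambda>_. 1) (\<lambda>_. 1) = 1" unfolding ip_def using Ks[OF y] by simp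
    ultimately show ?thesis unfolding ip_def by (simp add: power2_eq_square)
  qed
  have "ip S w (lop S K u) (lop S K u) = (\<Sum>y\<in>S. w y * (lop S K u y * lop S K u y))"
    unfolding ip_def by (simp add: mult.assoc)
  also have "\<dots> \<le> (\<Sum>y\<in>S. w y * (\<Sum>x\<in>S. K y x * u x * u x))"
    by (intro sum_mono mult_left_mono pt wnn)
  also have "\<dots> = (\<Sum>y\<in>S. \<Sum>x\<in>S. w y * K y x * u x * u x)"
    by (simp add: sum_distrib_left mult.assoc)
  also have "\<dots> = (\<Sum>y\<in>S. \<Sum>x\<in>S. w x * K x y * u x * u x)"
    using rev unfolding reversible_def by (intro sum.cong refl) auto
  also have "\<dots> = (\<Sum>x\<in>S. \<Sum>y\<in>S. w x * K x y * u x * u x)" by (rule sum.swap)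
  also have "\<dots> = (\<Sum>x\<in>S. w x * u x * u x * (\<Sum>y\<in>S. K x y))"
    by (simp add: sum_distrib_left algebra_simps)
  also have "\<dots> = ip S w u u" unfolding ip_def using Ks by simp
  finally show ?thesis .
qed

lemma disc_facts:
  assumes dc: "disc_chain S K w \<mu>"
  defines "f \<equiv> \<lambda>m. pi_sq S w (\<lambda>y. (\<Sum>x\<in>S. \<mu> x * mpow S K m x y) / w y - 1)"
  shows "\<And>m. f (Suc m) \<le> f m" "\<And>m. (f (Suc m))\<^sup>2 \<le> f m * f (Suc (Suc m))" "\<And>m. f m \<ge> 0"
    and "f 1 = pi_sq S w (\<lambda>y. (\<Sum>x\<in>S. \<mu> x * K x y) / w y) - 1"
proof -
  have fin: "finite S" and st: "stochastic S K" and irr: "irreducible_disc S K"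
    and sta: "stationary_disc S K w" and rev: "reversible S K w" and pm: "prob_on S \<mu>"
    using dc unfolding disc_chain_def by auto
  have Knn: "\<And>x y. x \<in> S \<Longrightarrow> y \<in> S \<Longrightarrow> K x y \<ge> 0" and Ks: "\<And>x. x \<in> S \<Longrightarrow> (\<Sum>y\<in>S. K x y) = 1"
    using st unfolding stochastic_def by auto
  have pw: "prob_on S w" using sta unfolding stationary_disc_def by simp
  have bk: "w x = 0" if xy: "x \<in> S" "y \<in> S" "w y = 0" "K x y > 0" for x y
  proof -
    have "w x * K x y = w y * K y x" using rev xy(1,2) unfolding reversible_def by auto
    then have "w x * K x y = 0" using xy(3) by simp
    then show "w x = 0" using xy(4) by simp
  qed
  have pos: "\<And>y. y \<in> S \<Longrightarrow> w y > 0"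
    by (rule pi_pos_gen[OF fin Knn irr pw bk])
  have wnn: "\<And>y. y \<in> S \<Longrightarrow> w y \<ge> 0" using pos by (simp add: less_imp_le)
  define \<rho> where "\<rho> m y = (\<Sum>x\<in>S. \<mu> x * mpow S K m x y)" for m y
  have \<rho>S: "\<rho> (Suc m) y = (\<Sum>z\<in>S. \<rho> m z * K z y)" for m y
  proof -
    have "\<rho> (Suc m) y = (\<Sum>x\<in>S. \<Sum>z\<in>S. \<mu> x * mpow S K m x z * K z y)"
      unfolding \<rho>_def by (simp add: sum_distrib_left mult.assoc)
    also have "\<dots> = (\<Sum>z\<in>S. \<Sum>x\<in>S. \<mu> x * mpow S K m x z * K z y)" by (rule sum.swap)
    also have "\<dots> = (\<Sum>z\<in>S. \<rho> m z * K z y)"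
      unfolding \<rho>_def by (simp add: sum_distrib_right)
    finally show ?thesis .
  qed
  define G where "G m y = \<rho> m y / w y - 1" for m y
  have GS: "G (Suc m) y = lop S K (G m) y" if y: "y \<in> S" for m y
  proof -
    have "lop S K (G m) y = lop S K (\<lambda>x. \<rho> m x / w x) y - (\<Sum>x\<in>S. K y x)"
      unfolding lop_def G_def by (simp add: algebra_simps sum_subtractf)
    also have "\<dots> = (\<Sum>x\<in>S. \<rho> m x * K x y) / w y - 1"
      using rowvec[OF rev pos y, of "\<rho> m"] Ks[OF y] by simp
    finally show ?thesis unfolding G_def \<rho>S by simp
  qed
  have fG: "f m = ip S w (G m) (G m)" for m
    unfolding f_def G_def \<rho>_def pi_sq_ip ..
  show "f m \<ge> 0" for m unfolding fG by (rule ip_nonneg[OF wnn])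
  show "f (Suc m) \<le> f m" for m
  proof -
    have "f (Suc m) = ip S w (lop S K (G m)) (lop S K (G m))"
      unfolding fG by (rule ip_cong) (simp_all add: GS)
    also have "\<dots> \<le> ip S w (G m) (G m)" by (rule contraction[OF st rev wnn])
    finally show ?thesis unfolding fG .
  qed
  show "(f (Suc m))\<^sup>2 \<le> f m * f (Suc (Suc m))" for m
  proof -
    have "f (Suc m) = ip S w (lop S K (G m)) (G (Suc m))"
      unfolding fG by (rule ip_cong) (simp_all add: GS)
    also have "\<dots> = ip S w (G m) (lop S K (G (Suc m)))" by (rule selfadj[OF rev])
    also have "\<dots> = ip S w (G m) (G (Suc (Suc m)))"
      by (rule ip_cong) (simp_all add: GS)
    finally have e: "f (Suc m) = ip S w (G m) (G (Suc (Suc m)))" .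
    show ?thesis unfolding e unfolding fG by (rule wCS[OF wnn])
  qed
  have m1: "mpow S K 1 x y = K x y" if "x \<in> S" for x y
  proof -
    have "mpow S K 1 x y = (\<Sum>z\<in>S. if x = z then K z y else 0)"
      by (simp, rule sum.cong) auto
    also have "\<dots> = K x y" using that fin by (simp add: sum.delta)
    finally show ?thesis .
  qed
  have r1: "\<rho> 1 y = (\<Sum>x\<in>S. \<mu> x * K x y)" for y
    unfolding \<rho>_def
  proof (rule sum.cong[OF refl])
    fix x assume x: "x \<in> S"
    show "\<mu> x * mpow S K 1 x y = \<mu> x * K x y" by (simp only: m1[OF x])
  qed
  have r1': "\<rho> 1 = (\<lambda>y. \<Sum>x\<in>S. \<mu> x * K x y)" by (rule ext) (rule r1)
  have s1: "sum (\<rho> 1) S = 1"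
  proof -
    have "sum (\<rho> 1) S = (\<Sum>y\<in>S. \<Sum>x\<in>S. \<mu> x * K x y)" unfolding r1' ..
    also have "\<dots> = (\<Sum>x\<in>S. \<Sum>y\<in>S. \<mu> x * K x y)" by (rule sum.swap)
    also have "\<dots> = (\<Sum>x\<in>S. \<mu> x * (\<Sum>y\<in>S. K x y))" by (simp add: sum_distrib_left)
    also have "\<dots> = sum \<mu> S" using Ks by simp
    finally show ?thesis using pm unfolding prob_on_def by simp
  qed
  have sw: "sum w S = 1" using pw unfolding prob_on_def by simp
  have "f 1 = pi_sq S w (\<lambda>y. \<rho> 1 y / w y - 1)" unfolding f_def \<rho>_def ..
  also have "\<dots> = pi_sq S w (\<lambda>y. \<rho> 1 y / w y) - 1" by (rule sq_minus1[OF fin pos s1 sw])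
  finally show "f 1 = pi_sq S w (\<lambda>y. (\<Sum>x\<in>S. \<mu> x * K x y) / w y) - 1" unfolding r1' .
qed



lemma rowbound:
  fixes r :: "nat \<Rightarrow> 'a \<Rightarrow> real" and Q :: "'a \<Rightarrow> 'a \<Rightarrow> real"
  assumes fin: "finite S" and rec: "\<And>k y. r (Suc k) y = (\<Sum>z\<in>S. r k z * Q z y)"
  shows "(\<Sum>y\<in>S. \<bar>r k y\<bar>) \<le> (\<Sum>z\<in>S. \<Sum>y\<in>S. \<bar>Q z y\<bar>) ^ k * (\<Sum>y\<in>S. \<bar>r 0 y\<bar>)"
proof (induction k)
  case 0 show ?case by simp
next
  case (Suc k)
  define M where "M = (\<Sum>z\<in>S. \<Sum>y\<in>S. \<bar>Q z y\<bar>)"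
  have M0: "M \<ge> 0" unfolding M_def by (intro sum_nonneg) auto
  have rowM: "(\<Sum>y\<in>S. \<bar>Q z y\<bar>) \<le> M" if "z \<in> S" for z
    unfolding M_def using that fin by (intro member_le_sum) (auto intro: sum_nonneg)
  have "(\<Sum>y\<in>S. \<bar>r (Suc k) y\<bar>) \<le> (\<Sum>y\<in>S. \<Sum>z\<in>S. \<bar>r k z\<bar> * \<bar>Q z y\<bar>)"
    unfolding rec by (intro sum_mono) (auto intro: order_trans[OF sum_abs] simp: abs_mult)
  also have "\<dots> = (\<Sum>z\<in>S. \<Sum>y\<in>S. \<bar>r k z\<bar> * \<bar>Q z y\<bar>)" by (rule sum.swap)
  also have "\<dots> = (\<Sum>z\<in>S. \<bar>r k z\<bar> * (\<Sum>y\<in>S. \<bar>Q z y\<bar>))" by (simp add: sum_distrib_left)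
  also have "\<dots> \<le> (\<Sum>z\<in>S. \<bar>r k z\<bar> * M)" by (intro sum_mono mult_left_mono rowM) auto
  also have "\<dots> = M * (\<Sum>z\<in>S. \<bar>r k z\<bar>)" by (simp add: sum_distrib_left mult.commute)
  also have "\<dots> \<le> M * (M ^ k * (\<Sum>y\<in>S. \<bar>r 0 y\<bar>))"
    using Suc.IH M0 unfolding M_def by (intro mult_left_mono) auto
  finally show ?case unfolding M_def by (simp add: mult.assoc)
qed

lemma pw_summable:
  fixes c :: "nat \<Rightarrow> real"
  assumes b: "\<And>k. \<bar>c k\<bar> \<le> C * M ^ k"
  shows "summable (\<lambda>k. c k / fact k * t ^ k)"
proof (rule summable_comparison_test'[of "\<lambda>k. C * (inverse (fact k) * (M * \<bar>t\<bar>) ^ k)" 0])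
  show "summable (\<lambda>k. C * (inverse (fact k) * (M * \<bar>t\<bar>) ^ k))"
    by (intro summable_mult summable_exp)
  fix k :: nat
  have "norm (c k / fact k * t ^ k) = \<bar>c k\<bar> * (\<bar>t\<bar> ^ k / fact k)"
    by (simp add: abs_mult power_abs)
  also have "\<dots> \<le> C * M ^ k * (\<bar>t\<bar> ^ k / fact k)"
    by (intro mult_right_mono b) auto
  also have "\<dots> = C * (inverse (fact k) * (M * \<bar>t\<bar>) ^ k)"
    by (simp add: power_mult_distrib field_simps)
  finally show "norm (c k / fact k * t ^ k) \<le> C * (inverse (fact k) * (M * \<bar>t\<bar>) ^ k)" .
qed

lemma dirichlet:
  assumes fin: "finite S" and gen: "generator S L" and rev: "reversible S L w"
    and wnn: "\<And>y. y \<in> S \<Longrightarrow> w y \<ge> 0"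
  shows "ip S w u (lop S L u) \<le> 0"
proof -
  have offd: "\<And>x y. x \<in> S \<Longrightarrow> y \<in> S \<Longrightarrow> x \<noteq> y \<Longrightarrow> L x y \<ge> 0"
    and rs: "\<And>x. x \<in> S \<Longrightarrow> (\<Sum>y\<in>S. L x y) = 0" using gen unfolding generator_def by auto
  define X where "X = ip S w u (lop S L u)"
  have X: "X = (\<Sum>y\<in>S. \<Sum>x\<in>S. w y * L y x * u y * u x)"
    unfolding X_def ip_def lop_def by (simp add: sum_distrib_left algebra_simps)
  have T1: "(\<Sum>y\<in>S. \<Sum>x\<in>S. w y * L y x * (u y * u y)) = 0"
  proof -
    have "(\<Sum>y\<in>S. \<Sum>x\<in>S. w y * L y x * (u y * u y)) = (\<Sum>y\<in>S. w y * (u y * u y) * (\<Sum>x\<in>S. L y x))"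
      by (simp add: sum_distrib_left algebra_simps)
    also have "\<dots> = 0" using rs by simp
    finally show ?thesis .
  qed
  have T3: "(\<Sum>y\<in>S. \<Sum>x\<in>S. w y * L y x * (u x * u x)) = 0"
  proof -
    have "(\<Sum>y\<in>S. \<Sum>x\<in>S. w y * L y x * (u x * u x)) = (\<Sum>y\<in>S. \<Sum>x\<in>S. w x * L x y * (u x * u x))"
      using rev unfolding reversible_def by (intro sum.cong refl) auto
    also have "\<dots> = (\<Sum>x\<in>S. \<Sum>y\<in>S. w x * L x y * (u x * u x))" by (rule sum.swap)
    also have "\<dots> = 0" using T1 by simp
    finally show ?thesis .
  qed
  have nonneg: "0 \<le> (\<Sum>y\<in>S. \<Sum>x\<in>S. w y * L y x * ((u y - u x) * (u y - u x)))"
  proof (intro sum_nonneg)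
    fix y x assume y: "y \<in> S" and x: "x \<in> S"
    show "0 \<le> w y * L y x * ((u y - u x) * (u y - u x))"
    proof (cases "x = y")
      case True then show ?thesis by simp
    next
      case False
      then have "L y x \<ge> 0" using offd[OF y x] by auto
      then show ?thesis using wnn[OF y] by (intro mult_nonneg_nonneg zero_le_square) auto
    qed
  qed
  have "(\<Sum>y\<in>S. \<Sum>x\<in>S. w y * L y x * ((u y - u x) * (u y - u x)))
      = (\<Sum>y\<in>S. \<Sum>x\<in>S. w y * L y x * (u y * u y)) - 2 * X + (\<Sum>y\<in>S. \<Sum>x\<in>S. w y * L y x * (u x * u x))"
    unfolding X by (simp add: sum_subtractf sum.distrib sum_distrib_left algebra_simps)
  then have "0 \<le> - 2 * X" using nonneg T1 T3 by simp
  then show ?thesis unfolding X_def by simp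
qed



lemma logconv:
  fixes f f1 f2 :: "real \<Rightarrow> real"
  assumes D1: "\<And>t. (f has_real_derivative f1 t) (at t)"
    and D2: "\<And>t. (f1 has_real_derivative f2 t) (at t)"
    and nn: "\<And>t. f t \<ge> 0" and neg: "\<And>t. f1 t \<le> 0"
    and cs: "\<And>t. (f1 t)\<^sup>2 \<le> f t * f2 t" and f0: "f 0 > 0"
  shows "\<forall>t\<ge>0. sqrt (f t) > 0" "convex_on {0..} (\<lambda>t. ln (sqrt (f t)))"
    "\<forall>s t. 0 \<le> s \<longrightarrow> s \<le> t \<longrightarrow> sqrt (f t) \<le> sqrt (f s)"
    "continuous_on {0..} (\<lambda>t. sqrt (f t))"
proof -
  have wmono: "f1 x / f x \<le> f1 y / f y" if xy: "x \<le> y" and p: "\<And>t. x \<le> t \<Longrightarrow> t \<le> y \<Longrightarrow> f t > 0" for x y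
  proof (rule DERIV_nonneg_imp_nondecreasing[OF xy])
    fix t assume t: "x \<le> t" "t \<le> y"
    have ft: "f t > 0" using p[OF t] .
    have "((\<lambda>t. f1 t / f t) has_real_derivative (f2 t * f t - f1 t * f1 t) / (f t * f t)) (at t)"
      by (rule DERIV_divide[OF D2 D1]) (use ft in simp)
    moreover have "(f2 t * f t - f1 t * f1 t) / (f t * f t) \<ge> 0"
      using cs[of t] ft by (intro divide_nonneg_pos) (auto simp: power2_eq_square algebra_simps)
    ultimately show "\<exists>y. ((\<lambda>t. f1 t / f t) has_real_derivative y) (at t) \<and> 0 \<le> y" by blast
  qed
  have dln: "((\<lambda>t. ln (f t)) has_real_derivative f1 t / f t) (at t)" if "f t > 0" for t
    using DERIV_chain2[OF DERIV_ln_divide[OF that] D1[of t]] by simp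
  define c where "c = f1 0 / f 0"
  have lnlow: "ln (f 0) + c * s \<le> ln (f s)" if s: "0 \<le> s" and p: "\<And>t. 0 \<le> t \<Longrightarrow> t \<le> s \<Longrightarrow> f t > 0" for s
  proof -
    have "ln (f 0) - c * 0 \<le> ln (f s) - c * s"
    proof (rule DERIV_nonneg_imp_nondecreasing[OF s])
      fix t assume t: "0 \<le> t" "t \<le> s"
      have "((\<lambda>t. ln (f t) - c * t) has_real_derivative f1 t / f t - c * 1) (at t)"
        by (intro DERIV_diff dln p t DERIV_cmult DERIV_ident)
      moreover have "f1 t / f t - c * 1 \<ge> 0"
        using wmono[of 0 t] p t unfolding c_def by auto
      ultimately show "\<exists>y. ((\<lambda>t. ln (f t) - c * t) has_real_derivative y) (at t) \<and> 0 \<le> y" by blast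
    qed
    then show ?thesis by simp
  qed
  have cont: "isCont f t" for t using D1[of t] by (rule DERIV_isCont)
  have pos: "f t > 0" if t: "t \<ge> 0" for t
  proof (rule ccontr)
    assume "\<not> f t > 0"
    then have ft: "f t = 0" using nn[of t] by simp
    define Z where "Z = {t. 0 \<le> t \<and> f t = 0}"
    have clZ: "closed Z" unfolding Z_def
    proof (rule closed_Collect_conj)
      show "closed {t::real. 0 \<le> t}" using closed_atLeast[of "0::real"] by (simp add: atLeast_def)
      show "closed {t. f t = 0}"
        by (rule closed_Collect_eq) (auto intro: continuous_at_imp_continuous_on cont)
    qed
    have Zne: "Z \<noteq> {}" using t ft unfolding Z_def by auto
    have bdd: "bdd_below Z" unfolding Z_def by (rule bdd_belowI[of _ 0]) auto
    define z where "z = Inf Z"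
    have zZ: "z \<in> Z" unfolding z_def by (rule closed_contains_Inf[OF Zne bdd clZ])
    then have z0: "0 \<le> z" and fz: "f z = 0" unfolding Z_def by auto
    have below: "f s > 0" if "0 \<le> s" "s < z" for s
    proof (rule ccontr)
      assume "\<not> f s > 0"
      then have "s \<in> Z" using nn[of s] that unfolding Z_def by auto
      then have "z \<le> s" unfolding z_def by (rule cInf_lower[OF _ bdd])
      then show False using that by simp
    qed
    have zpos: "z > 0" using z0 fz f0 by (cases "z = 0") auto
    have c0: "c \<le> 0" unfolding c_def using neg[of 0] f0 by (simp add: divide_nonpos_pos)
    define \<eta> where "\<eta> = f 0 * exp (c * z)"
    have \<eta>: "\<eta> > 0" unfolding \<eta>_def using f0 by simp
    have lowb: "f s \<ge> \<eta>" if s: "0 \<le> s" "s < z" for s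
    proof -
      have "ln (f 0) + c * s \<le> ln (f s)" by (rule lnlow) (use s below in auto)
      moreover have "c * z \<le> c * s" using c0 s by (intro mult_left_mono_neg) auto
      ultimately have "ln (f 0) + c * z \<le> ln (f s)" by simp
      then have "exp (ln (f 0) + c * z) \<le> exp (ln (f s))" by simp
      then show ?thesis unfolding \<eta>_def using f0 below[OF s] by (simp add: exp_add)
    qed
    obtain \<delta> where \<delta>: "\<delta> > 0" "\<And>x. x \<noteq> z \<and> norm (x - z) < \<delta> \<Longrightarrow> norm (f x - f z) < \<eta>"
      using cont[of z] \<eta> unfolding isCont_def LIM_eq by blast
    define x where "x = max 0 (z - \<delta> / 2)"
    have x: "0 \<le> x" "x < z" "norm (x - z) < \<delta>" using zpos \<delta>(1) unfolding x_def by auto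
    have "norm (f x - f z) < \<eta>" using \<delta>(2)[of x] x by auto
    then have "f x < \<eta>" using fz nn[of x] by simp
    then show False using lowb[OF x(1,2)] by simp
  qed
  show "\<forall>t\<ge>0. sqrt (f t) > 0" using pos by simp
  have lneq: "(\<lambda>t. ln (sqrt (f t))) = (\<lambda>t. ln (f t) / 2)" using nn by (simp add: ln_sqrt)
  show "convex_on {0..} (\<lambda>t. ln (sqrt (f t)))" unfolding lneq
  proof (rule convex_on_realI[where f' = "\<lambda>t. (f1 t / f t) / 2"])
    show "connected {0::real..}" by simp
    fix x assume "x \<in> {0::real..}"
    then have "f x > 0" using pos by simp
    then show "((\<lambda>t. ln (f t) / 2) has_real_derivative f1 x / f x / 2) (at x)"
      by (intro DERIV_cdivide dln)
  next
    fix x y :: real assume "x \<in> {0..}" "y \<in> {0..}" "x \<le> y"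
    then have "f1 x / f x \<le> f1 y / f y" by (intro wmono) (auto intro: pos)
    then show "f1 x / f x / 2 \<le> f1 y / f y / 2" by simp
  qed
  show "\<forall>s t. 0 \<le> s \<longrightarrow> s \<le> t \<longrightarrow> sqrt (f t) \<le> sqrt (f s)"
  proof (intro allI impI)
    fix s t :: real assume "0 \<le> s" "s \<le> t"
    have "f t \<le> f s"
      by (rule DERIV_nonpos_imp_nonincreasing[OF \<open>s \<le> t\<close>]) (use D1 neg in blast)
    then show "sqrt (f t) \<le> sqrt (f s)" by simp
  qed
  show "continuous_on {0..} (\<lambda>t. sqrt (f t))"
    by (intro continuous_on_real_sqrt continuous_at_imp_continuous_on) (auto intro: cont)
qed



lemma cont_facts:
  assumes cc: "cont_chain S L w \<mu>"
  shows "\<exists>f f1 f2. (\<forall>t. d2_cont S L w \<mu> t = sqrt (f t))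
     \<and> (\<forall>t. (f has_real_derivative f1 t) (at t)) \<and> (\<forall>t. (f1 has_real_derivative f2 t) (at t))
     \<and> (\<forall>t. f t \<ge> 0) \<and> (\<forall>t. f1 t \<le> 0) \<and> (\<forall>t. (f1 t)\<^sup>2 \<le> f t * f2 t)
     \<and> f 0 = pi_sq S w (\<lambda>y. \<mu> y / w y) - 1"
proof -
  have fin: "finite S" and gen: "generator S L" and irr: "irreducible_cont S L"
    and sta: "stationary_cont S L w" and rev: "reversible S L w" and pm: "prob_on S \<mu>"
    using cc unfolding cont_chain_def by auto
  have offd: "\<And>x y. x \<in> S \<Longrightarrow> y \<in> S \<Longrightarrow> x \<noteq> y \<Longrightarrow> L x y \<ge> 0"
    and rs: "\<And>x. x \<in> S \<Longrightarrow> (\<Sum>y\<in>S. L x y) = 0" using gen unfolding generator_def by auto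
  have pw: "prob_on S w" using sta unfolding stationary_cont_def by simp
  define Q where "Q x y = (if x = y then 0 else L x y)" for x y
  have Qnn: "\<And>x y. x \<in> S \<Longrightarrow> y \<in> S \<Longrightarrow> Q x y \<ge> 0" unfolding Q_def using offd by auto
  have irrQ: "irreducible_disc S Q" using irr unfolding irreducible_cont_def Q_def .
  have bk: "w x = 0" if xy: "x \<in> S" "y \<in> S" "w y = 0" "Q x y > 0" for x y
  proof -
    have "w x * L x y = w y * L y x" using rev xy(1,2) unfolding reversible_def by auto
    then have "w x * L x y = 0" using xy(3) by simp
    moreover have "L x y > 0" using xy(4) unfolding Q_def by (auto split: if_splits)
    ultimately show "w x = 0" by simp
  qed
  have pos: "\<And>y. y \<in> S \<Longrightarrow> w y > 0" by (rule pi_pos_gen[OF fin Qnn irrQ pw bk])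
  have wnn: "\<And>y. y \<in> S \<Longrightarrow> w y \<ge> 0" using pos by (simp add: less_imp_le)
  define \<rho> where "\<rho> k y = (\<Sum>x\<in>S. \<mu> x * mpow S L k x y)" for k y
  have \<rho>S: "\<rho> (Suc m) y = (\<Sum>z\<in>S. \<rho> m z * L z y)" for m y
  proof -
    have "\<rho> (Suc m) y = (\<Sum>x\<in>S. \<Sum>z\<in>S. \<mu> x * mpow S L m x z * L z y)"
      unfolding \<rho>_def by (simp add: sum_distrib_left mult.assoc)
    also have "\<dots> = (\<Sum>z\<in>S. \<Sum>x\<in>S. \<mu> x * mpow S L m x z * L z y)" by (rule sum.swap)
    also have "\<dots> = (\<Sum>z\<in>S. \<rho> m z * L z y)"
      unfolding \<rho>_def by (simp add: sum_distrib_right)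
    finally show ?thesis .
  qed
  define a where "a k y = \<rho> k y / w y" for k y
  have aS: "a (Suc k) y = lop S L (a k) y" if y: "y \<in> S" for k y
    unfolding a_def \<rho>S using rowvec[OF rev pos y, of "\<rho> k"] by simp
  define M where "M = (\<Sum>z\<in>S. \<Sum>y\<in>S. \<bar>L z y\<bar>)"
  define N0 where "N0 = (\<Sum>y\<in>S. \<bar>\<rho> 0 y\<bar>)"
  have abnd: "\<bar>a k y\<bar> \<le> (N0 / w y) * M ^ k" if y: "y \<in> S" for k y
  proof -
    have "\<bar>\<rho> k y\<bar> \<le> (\<Sum>y\<in>S. \<bar>\<rho> k y\<bar>)" using fin y by (intro member_le_sum) auto
    also have "\<dots> \<le> M ^ k * N0" unfolding M_def N0_def by (rule rowbound[where S=S and r=\<rho> and Q=L, OF fin \<rho>S])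
    finally have r: "\<bar>\<rho> k y\<bar> \<le> M ^ k * N0" .
    have "\<bar>a k y\<bar> = \<bar>\<rho> k y\<bar> / w y" unfolding a_def using pos[OF y] by simp
    also have "\<dots> \<le> (M ^ k * N0) / w y" using r pos[OF y] by (intro divide_right_mono) auto
    also have "\<dots> = (N0 / w y) * M ^ k" by simp
    finally show ?thesis .
  qed
  have asum: "summable (\<lambda>k. a k y / fact k * t ^ k)" if y: "y \<in> S" for y t
    by (rule pw_summable[OF abnd[OF y]])
  have mbnd: "\<bar>mpow S L k x y\<bar> \<le> (\<Sum>y\<in>S. \<bar>mpow S L 0 x y\<bar>) * M ^ k" if y: "y \<in> S" for k x y
  proof -
    have "\<bar>mpow S L k x y\<bar> \<le> (\<Sum>y\<in>S. \<bar>mpow S L k x y\<bar>)" using fin y by (intro member_le_sum) auto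
    also have "\<dots> \<le> M ^ k * (\<Sum>y\<in>S. \<bar>mpow S L 0 x y\<bar>)" unfolding M_def
    proof (rule rowbound[where S=S and r="\<lambda>k y. mpow S L k x y" and Q=L, OF fin])
      fix k y show "mpow S L (Suc k) x y = (\<Sum>z\<in>S. mpow S L k x z * L z y)" by simp
    qed
    finally show ?thesis by (simp add: mult.commute)
  qed
  define E where "E t y = (\<Sum>k. a k y / fact k * t ^ k)" for t y
  have heat_rep: "(\<Sum>x\<in>S. \<mu> x * heat S L t x y) / w y = E t y" if y: "y \<in> S" for t y
  proof -
    have hs: "(\<lambda>k. t ^ k / fact k * mpow S L k x y) sums heat S L t x y" for x
    proof -
      have "summable (\<lambda>k. mpow S L k x y / fact k * t ^ k)" by (rule pw_summable[OF mbnd[OF y]])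
      then have "summable (\<lambda>k. t ^ k / fact k * mpow S L k x y)" by (simp add: algebra_simps)
      then show ?thesis unfolding heat_def by (rule summable_sums)
    qed
    have "(\<lambda>k. (\<Sum>x\<in>S. \<mu> x * (t ^ k / fact k * mpow S L k x y)) / w y)
        sums ((\<Sum>x\<in>S. \<mu> x * heat S L t x y) / w y)"
      by (intro sums_divide sums_sum sums_mult hs)
    moreover have "(\<lambda>k. (\<Sum>x\<in>S. \<mu> x * (t ^ k / fact k * mpow S L k x y)) / w y) = (\<lambda>k. a k y / fact k * t ^ k)"
    proof
      fix k
      have "(\<Sum>x\<in>S. \<mu> x * (t ^ k / fact k * mpow S L k x y)) = t ^ k / fact k * \<rho> k y"
        unfolding \<rho>_def by (simp add: sum_distrib_left mult.left_commute)
      then show "(\<Sum>x\<in>S. \<mu> x * (t ^ k / fact k * mpow S L k x y)) / w y = a k y / fact k * t ^ k"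
        unfolding a_def by (simp only:) (simp add: ac_simps)
    qed
    ultimately have "(\<lambda>k. a k y / fact k * t ^ k) sums ((\<Sum>x\<in>S. \<mu> x * heat S L t x y) / w y)" by simp
    then show ?thesis unfolding E_def by (simp add: sums_iff)
  qed
  define G where "G t y = E t y - 1" for t y
  define LG where "LG t = lop S L (G t)" for t
  have lopE: "lop S L (E t) y = LG t y" if y: "y \<in> S" for t y
  proof -
    have "LG t y = lop S L (E t) y - (\<Sum>x\<in>S. L y x)"
      unfolding LG_def lop_def G_def by (simp add: right_diff_distrib sum_subtractf)
    then show ?thesis using rs[OF y] by simp
  qed
  have dE: "((\<lambda>t. E t y) has_real_derivative LG t y) (at t)" if y: "y \<in> S" for t y
  proof -
    have "((\<lambda>t. \<Sum>k. a k y / fact k * t ^ k) has_field_derivative (\<Sum>k. diffs (\<lambda>k. a k y / fact k) k * t ^ k)) (at t)"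
      by (rule termdiffs_strong_converges_everywhere) (rule asum[OF y])
    moreover have "(\<Sum>k. diffs (\<lambda>k. a k y / fact k) k * t ^ k) = LG t y"
    proof -
      have "(\<lambda>k. diffs (\<lambda>k. a k y / fact k) k * t ^ k) = (\<lambda>k. \<Sum>x\<in>S. L y x * (a k x / fact k * t ^ k))"
      proof
        fix k
        have c: "(of_nat (Suc k) :: real) \<noteq> 0" "(fact k :: real) \<noteq> 0" by simp_all
        have "diffs (\<lambda>k. a k y / fact k) k = of_nat (Suc k) * (a (Suc k) y / (of_nat (Suc k) * fact k))"
          unfolding diffs_def by (simp only: fact_Suc)
        also have "\<dots> = a (Suc k) y / fact k"
          by (subst times_divide_eq_right, rule mult_divide_mult_cancel_left[OF c(1)])
        finally have "diffs (\<lambda>k. a k y / fact k) k * t ^ k = a (Suc k) y / fact k * t ^ k" by simp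
        also have "\<dots> = (\<Sum>x\<in>S. L y x * a k x) * (t ^ k / fact k)"
          unfolding aS[OF y] lop_def by simp
        also have "\<dots> = (\<Sum>x\<in>S. L y x * a k x * (t ^ k / fact k))"
          by (rule sum_distrib_right)
        also have "\<dots> = (\<Sum>x\<in>S. L y x * (a k x / fact k * t ^ k))"
          by (rule sum.cong) simp_all
        finally show "diffs (\<lambda>k. a k y / fact k) k * t ^ k = (\<Sum>x\<in>S. L y x * (a k x / fact k * t ^ k))" .
      qed
      then have "(\<Sum>k. diffs (\<lambda>k. a k y / fact k) k * t ^ k) = (\<Sum>x\<in>S. \<Sum>k. L y x * (a k x / fact k * t ^ k))"
        by (simp only:) (rule suminf_sum, intro summable_mult asum)
      also have "\<dots> = (\<Sum>x\<in>S. L y x * E t x)"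
        unfolding E_def by (intro sum.cong refl suminf_mult asum) auto
      also have "\<dots> = LG t y" using lopE[OF y] unfolding lop_def by simp
      finally show ?thesis .
    qed
    ultimately show ?thesis unfolding E_def by simp
  qed
  have dG: "((\<lambda>t. G t y) has_real_derivative LG t y) (at t)" if y: "y \<in> S" for t y
    unfolding G_def using DERIV_diff[OF dE[OF y] DERIV_const[of 1]] by simp
  have dLG: "((\<lambda>t. LG t y) has_real_derivative lop S L (LG t) y) (at t)" for t y
  proof -
    have "((\<lambda>t. \<Sum>x\<in>S. L y x * G t x) has_real_derivative (\<Sum>x\<in>S. L y x * LG t x)) (at t)"
      by (intro DERIV_sum DERIV_cmult dG)
    then show ?thesis unfolding LG_def lop_def .
  qed
  define f where "f t = ip S w (G t) (G t)" for t
  define f1 where "f1 t = 2 * ip S w (G t) (LG t)" for t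
  define f2 where "f2 t = 2 * ip S w (LG t) (LG t) + 2 * ip S w (G t) (lop S L (LG t))" for t
  have D1: "(f has_real_derivative f1 t) (at t)" for t
  proof -
    have "((\<lambda>t. \<Sum>y\<in>S. w y * G t y * G t y) has_real_derivative
        (\<Sum>y\<in>S. w y * LG t y * G t y + LG t y * (w y * G t y))) (at t)"
      by (intro DERIV_sum DERIV_mult DERIV_cmult dG)
    moreover have "(\<Sum>y\<in>S. w y * LG t y * G t y + LG t y * (w y * G t y)) = f1 t"
    proof -
      have "(\<Sum>y\<in>S. w y * LG t y * G t y + LG t y * (w y * G t y)) = (\<Sum>y\<in>S. 2 * (w y * G t y * LG t y))"
        by (rule sum.cong) (simp_all add: algebra_simps)
      then show ?thesis unfolding f1_def ip_def by (simp add: sum_distrib_left)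
    qed
    ultimately show ?thesis unfolding f_def ip_def by simp
  qed
  have D2: "(f1 has_real_derivative f2 t) (at t)" for t
  proof -
    have "((\<lambda>t. 2 * (\<Sum>y\<in>S. w y * G t y * LG t y)) has_real_derivative
        2 * (\<Sum>y\<in>S. w y * LG t y * LG t y + lop S L (LG t) y * (w y * G t y))) (at t)"
      by (intro DERIV_cmult DERIV_sum DERIV_mult dG dLG)
    moreover have "2 * (\<Sum>y\<in>S. w y * LG t y * LG t y + lop S L (LG t) y * (w y * G t y)) = f2 t"
    proof -
      have "(\<Sum>y\<in>S. w y * LG t y * LG t y + lop S L (LG t) y * (w y * G t y))
          = (\<Sum>y\<in>S. w y * LG t y * LG t y) + (\<Sum>y\<in>S. w y * G t y * lop S L (LG t) y)"
        by (simp add: sum.distrib mult.commute mult.left_commute)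
      then show ?thesis unfolding f2_def ip_def by simp
    qed
    ultimately show ?thesis unfolding f1_def ip_def by simp
  qed
  have f2eq: "f2 t = 4 * ip S w (LG t) (LG t)" for t
  proof -
    have "ip S w (G t) (lop S L (LG t)) = ip S w (lop S L (G t)) (LG t)"
      by (rule selfadj[OF rev, symmetric])
    then show ?thesis unfolding f2_def LG_def by simp
  qed
  have R1: "\<forall>t. d2_cont S L w \<mu> t = sqrt (f t)"
  proof
    fix t
    show "d2_cont S L w \<mu> t = sqrt (f t)"
      unfolding d2_cont_def f_def pi_sq_ip[symmetric] G_def
      by (rule arg_cong[where f = sqrt], unfold pi_sq_def, rule sum.cong) (simp_all add: heat_rep)
  qed
  have R2: "\<forall>t. (f has_real_derivative f1 t) (at t)" by (intro allI D1)
  have R3: "\<forall>t. (f1 has_real_derivative f2 t) (at t)" by (intro allI D2)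
  have R4: "\<forall>t. f t \<ge> 0" unfolding f_def by (intro allI ip_nonneg wnn)
  have R5: "\<forall>t. f1 t \<le> 0" unfolding f1_def LG_def using dirichlet[OF fin gen rev wnn] by simp
  have R6: "\<forall>t. (f1 t)\<^sup>2 \<le> f t * f2 t"
  proof
    fix t show "(f1 t)\<^sup>2 \<le> f t * f2 t"
      unfolding f1_def f_def f2eq using wCS[where u="G t" and v="LG t", OF wnn] by (simp add: power2_eq_square)
  qed
  have E0: "E 0 y = \<mu> y / w y" if y: "y \<in> S" for y
  proof -
    have "E 0 y = a 0 y" unfolding E_def using powser_zero[of "\<lambda>k. a k y / fact k"] by simp
    moreover have "\<rho> 0 y = \<mu> y"
    proof -
      have "\<rho> 0 y = (\<Sum>x\<in>S. if x = y then \<mu> x else 0)" unfolding \<rho>_def by (rule sum.cong) auto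
      also have "\<dots> = \<mu> y" using y fin by (simp add: sum.delta)
      finally show ?thesis .
    qed
    ultimately show ?thesis unfolding a_def by simp
  qed
  have "f 0 = pi_sq S w (\<lambda>y. \<mu> y / w y - 1)"
    unfolding f_def pi_sq_ip G_def by (rule ip_cong) (simp_all add: E0)
  also have "\<dots> = pi_sq S w (\<lambda>y. \<mu> y / w y) - 1"
    by (rule sq_minus1[OF fin pos]) (use pm pw in \<open>auto simp: prob_on_def\<close>)
  finally have R7: "f 0 = pi_sq S w (\<lambda>y. \<mu> y / w y) - 1" .
  show ?thesis
    by (rule exI[of _ f], rule exI[of _ f1], rule exI[of _ f2]) (intro conjI R1 R2 R3 R4 R5 R6 R7)
qed



lemma cont_part:
  fixes S :: "nat \<Rightarrow> 'a set" and L :: "nat \<Rightarrow> 'a \<Rightarrow> 'a \<Rightarrow> real" and w \<mu> :: "nat \<Rightarrow> 'a \<Rightarrow> real"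
  assumes ch: "\<forall>n. cont_chain (S n) (L n) (w n) (\<mu> n)"
    and li: "liminf (\<lambda>n. ereal (pi_sq (S n) (w n) (\<lambda>y. \<mu> n y / w n y))) > 1"
  shows "cutoff_cont (\<lambda>n. d2_cont (S n) (L n) (w n) (\<mu> n)) \<longleftrightarrow> precutoff_cont (\<lambda>n. d2_cont (S n) (L n) (w n) (\<mu> n))"
proof
  assume "cutoff_cont (\<lambda>n. d2_cont (S n) (L n) (w n) (\<mu> n))"
  then show "precutoff_cont (\<lambda>n. d2_cont (S n) (L n) (w n) (\<mu> n))" by (rule cutoff_cont_pre)
next
  assume pc: "precutoff_cont (\<lambda>n. d2_cont (S n) (L n) (w n) (\<mu> n))"
  let ?d = "\<lambda>n. d2_cont (S n) (L n) (w n) (\<mu> n)"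
  have nn: "?d n t \<ge> 0" for n t
  proof -
    have "\<forall>y\<in>S n. w n y \<ge> 0" using ch unfolding cont_chain_def stationary_cont_def prob_on_def by blast
    then have "pi_sq (S n) (w n) u \<ge> 0" for u unfolding pi_sq_def by (intro sum_nonneg) auto
    then show ?thesis unfolding d2_cont_def by simp
  qed
  have evP: "eventually (\<lambda>n. ereal 1 < ereal (pi_sq (S n) (w n) (\<lambda>y. \<mu> n y / w n y))) sequentially"
    by (rule less_LiminfD) (use li in \<open>simp add: one_ereal_def\<close>)
  have ev: "eventually (\<lambda>n. (\<forall>t\<ge>0. ?d n t > 0) \<and> convex_on {0..} (\<lambda>t. ln (?d n t))
       \<and> (\<forall>s t. 0 \<le> s \<longrightarrow> s \<le> t \<longrightarrow> ?d n t \<le> ?d n s) \<and> continuous_on {0..} (?d n)) sequentially"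
    using evP
  proof eventually_elim
    case (elim n)
    obtain f f1 f2 where F: "\<forall>t. ?d n t = sqrt (f t)"
     "\<forall>t. (f has_real_derivative f1 t) (at t)" "\<forall>t. (f1 has_real_derivative f2 t) (at t)"
     "\<forall>t. f t \<ge> 0" "\<forall>t. f1 t \<le> 0" "\<forall>t. (f1 t)\<^sup>2 \<le> f t * f2 t"
     "f 0 = pi_sq (S n) (w n) (\<lambda>y. \<mu> n y / w n y) - 1"
      using cont_facts[OF ch[rule_format, of n]] by blast
    have f0: "f 0 > 0" using F(7) elim by simp
    have dn: "?d n = (\<lambda>t. sqrt (f t))" using F(1) by (intro ext) simp
    have LC: "\<forall>t\<ge>0. sqrt (f t) > 0" "convex_on {0..} (\<lambda>t. ln (sqrt (f t)))"
      "\<forall>s t. 0 \<le> s \<longrightarrow> s \<le> t \<longrightarrow> sqrt (f t) \<le> sqrt (f s)" "continuous_on {0..} (\<lambda>t. sqrt (f t))"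
      using logconv[of f f1 f2] F(2-6) f0 by blast+
    show ?case unfolding dn using LC by blast
  qed
  show "cutoff_cont ?d" by (rule cont_core[OF nn ev pc])
qed

lemma disc_part:
  fixes S :: "nat \<Rightarrow> 'a set" and K :: "nat \<Rightarrow> 'a \<Rightarrow> 'a \<Rightarrow> real" and w \<mu> :: "nat \<Rightarrow> 'a \<Rightarrow> real"
  assumes ch: "\<forall>n. disc_chain (S n) (K n) (w n) (\<mu> n)"
    and li: "liminf (\<lambda>n. ereal (pi_sq (S n) (w n) (\<lambda>y. (\<Sum>x\<in>S n. \<mu> n x * K n x y) / w n y))) > 1"
    and Te: "\<exists>\<epsilon>0>0. (\<lambda>n. T2_disc (S n) (K n) (w n) (\<mu> n) \<epsilon>0) \<longlonglongrightarrow> \<infinity>"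
  shows "cutoff_disc (\<lambda>n. d2_disc (S n) (K n) (w n) (\<mu> n)) \<longleftrightarrow> precutoff_disc (\<lambda>n. d2_disc (S n) (K n) (w n) (\<mu> n))"
proof
  assume "cutoff_disc (\<lambda>n. d2_disc (S n) (K n) (w n) (\<mu> n))"
  then show "precutoff_disc (\<lambda>n. d2_disc (S n) (K n) (w n) (\<mu> n))" by (rule cutoff_disc_pre)
next
  assume pc: "precutoff_disc (\<lambda>n. d2_disc (S n) (K n) (w n) (\<mu> n))"
  let ?d = "\<lambda>n. d2_disc (S n) (K n) (w n) (\<mu> n)"
  obtain \<epsilon>0 where e0: "\<epsilon>0 > 0" and Tl: "(\<lambda>n. T2_disc (S n) (K n) (w n) (\<mu> n) \<epsilon>0) \<longlonglongrightarrow> \<infinity>"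
    using Te by blast
  define f where "f n m = pi_sq (S n) (w n) (\<lambda>y. (\<Sum>x\<in>S n. \<mu> n x * mpow (S n) (K n) m x y) / w n y - 1)" for n m
  have dF: "?d n m = sqrt (f n m)" for n m unfolding d2_disc_def f_def ..
  have FF: "f n (Suc m) \<le> f n m" "(f n (Suc m))\<^sup>2 \<le> f n m * f n (Suc (Suc m))" "f n m \<ge> 0"
    "f n 1 = pi_sq (S n) (w n) (\<lambda>y. (\<Sum>x\<in>S n. \<mu> n x * K n x y) / w n y) - 1" for n m
    using disc_facts[OF ch[rule_format, of n]] unfolding f_def by blast+
  have nn: "?d n m \<ge> 0" for n m unfolding dF using FF(3) by simp
  have evP: "eventually (\<lambda>n. ereal 1 < ereal (pi_sq (S n) (w n) (\<lambda>y. (\<Sum>x\<in>S n. \<mu> n x * K n x y) / w n y))) sequentially"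
    by (rule less_LiminfD) (use li in \<open>simp add: one_ereal_def\<close>)
  have ev: "eventually (\<lambda>n. (\<forall>m. ?d n m > 0) \<and> (\<forall>m. ?d n (Suc m) \<le> ?d n m)
       \<and> (\<forall>m. 2 * ln (?d n (Suc m)) \<le> ln (?d n m) + ln (?d n (Suc (Suc m))))) sequentially"
    using evP
  proof eventually_elim
    case (elim n)
    have f1: "f n 1 > 0" using FF(4)[of n] elim by simp
    have fS: "f n (Suc m) > 0" for m
    proof (induction m)
      case 0 then show ?case using f1 by simp
    next
      case (Suc m)
      have "0 < (f n (Suc m))\<^sup>2" using Suc by simp
      also have "\<dots> \<le> f n m * f n (Suc (Suc m))" by (rule FF(2))
      finally have "0 < f n m * f n (Suc (Suc m))" .
      then show ?case using FF(3)[of n m] FF(3)[of n "Suc (Suc m)"] by (simp add: zero_less_mult_iff)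
    qed
    have f0: "f n 0 > 0"
    proof -
      have "0 < (f n 1)\<^sup>2" using f1 by simp
      also have "\<dots> \<le> f n 0 * f n (Suc (Suc 0))" using FF(2)[of n 0] by simp
      finally show ?thesis using FF(3)[of n 0] FF(3)[of n 2] by (simp add: zero_less_mult_iff)
    qed
    have fp: "f n m > 0" for m using f0 fS by (cases m) auto
    have A1: "\<forall>m. ?d n m > 0" unfolding dF using fp by simp
    have A2: "\<forall>m. ?d n (Suc m) \<le> ?d n m" unfolding dF using FF(1) by simp
    have A3: "\<forall>m. 2 * ln (?d n (Suc m)) \<le> ln (?d n m) + ln (?d n (Suc (Suc m)))"
    proof
      fix m
      have "ln ((f n (Suc m))\<^sup>2) \<le> ln (f n m * f n (Suc (Suc m)))"
        using FF(2)[of n m] fp[of "Suc m"] fp[of m] fp[of "Suc (Suc m)"] by (subst ln_le_cancel_iff) auto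
      then have "2 * ln (f n (Suc m)) \<le> ln (f n m) + ln (f n (Suc (Suc m)))"
        using fp[of m] fp[of "Suc m"] fp[of "Suc (Suc m)"] by (simp add: ln_mult ln_realpow)
      then show "2 * ln (?d n (Suc m)) \<le> ln (?d n m) + ln (?d n (Suc (Suc m)))"
        unfolding dF using fp[of m] fp[of "Suc m"] fp[of "Suc (Suc m)"] by (simp add: ln_sqrt less_imp_le)
    qed
    show ?case using A1 A2 A3 by blast
  qed
  have T: "eventually (\<lambda>n. \<forall>m\<le>M. \<epsilon>0 < ?d n m) sequentially" for M
  proof -
    have "eventually (\<lambda>n. ereal (real M) < T2_disc (S n) (K n) (w n) (\<mu> n) \<epsilon>0) sequentially"
      using Tl unfolding tendsto_PInfty by blast
    then show ?thesis
    proof eventually_elim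
      case (elim n)
      show ?case
      proof (intro allI impI)
        fix m assume mM: "m \<le> M"
        show "\<epsilon>0 < ?d n m"
        proof (rule ccontr)
          assume "\<not> \<epsilon>0 < ?d n m"
          then have "m \<in> {m. ?d n m \<le> \<epsilon>0}" by simp
          then have "T2_disc (S n) (K n) (w n) (\<mu> n) \<epsilon>0 \<le> ereal (real m)"
            unfolding T2_disc_def by (rule INF_lower)
          also have "\<dots> \<le> ereal (real M)" using mM by simp
          finally show False using elim by simp
        qed
      qed
    qed
  qed
  show "cutoff_disc ?d" by (rule disc_core[OF nn ev e0 T pc])
qed

theorem theorem3p1:
  fixes Sc :: "nat \<Rightarrow> 'a set" and L :: "nat \<Rightarrow> 'a \<Rightarrow> 'a \<Rightarrow> real"
    and \<pi>c \<mu>c :: "nat \<Rightarrow> 'a \<Rightarrow> real"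
    and Sd :: "nat \<Rightarrow> 'b set" and K :: "nat \<Rightarrow> 'b \<Rightarrow> 'b \<Rightarrow> real"
    and \<pi>d \<mu>d :: "nat \<Rightarrow> 'b \<Rightarrow> real"
  shows
   "((\<forall>n. cont_chain (Sc n) (L n) (\<pi>c n) (\<mu>c n)) \<and>
     liminf (\<lambda>n. ereal (pi_sq (Sc n) (\<pi>c n) (\<lambda>y. \<mu>c n y / \<pi>c n y))) > 1
     \<longrightarrow> (cutoff_cont (\<lambda>n. d2_cont (Sc n) (L n) (\<pi>c n) (\<mu>c n))
          \<longleftrightarrow> precutoff_cont (\<lambda>n. d2_cont (Sc n) (L n) (\<pi>c n) (\<mu>c n))))
    \<and>
    ((\<forall>n. disc_chain (Sd n) (K n) (\<pi>d n) (\<mu>d n)) \<and>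
     liminf (\<lambda>n. ereal (pi_sq (Sd n) (\<pi>d n)
        (\<lambda>y. (\<Sum>x\<in>Sd n. \<mu>d n x * K n x y) / \<pi>d n y))) > 1 \<and>
     (\<exists>\<epsilon>0>0. (\<lambda>n. T2_disc (Sd n) (K n) (\<pi>d n) (\<mu>d n) \<epsilon>0) \<longlonglongrightarrow> \<infinity>)
     \<longrightarrow> (cutoff_disc (\<lambda>n. d2_disc (Sd n) (K n) (\<pi>d n) (\<mu>d n))
          \<longleftrightarrow> precutoff_disc (\<lambda>n. d2_disc (Sd n) (K n) (\<pi>d n) (\<mu>d n))))"
  using cont_part[of Sc L \<pi>c \<mu>c] disc_part[of Sd K \<pi>d \<mu>d] by blast


end
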